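(* Let $\mathcal{D}\subset\mathbb{R}^d$ be a compact convex set and let $k$ be the squared exponential kernel $k(x_1,x_2)=M_k^2\exp(-\|x_2-x_1\|_2^2/(2l^2))$. Let $(f_t)_{t\ge1}$, $f_t:\mathcal{D}\to\mathbb{R}$, be a sequence of reward functions such that (i) for all $t$, $f_t$ lies in the RKHS $\mathcal{H}_k$ with $\|f_t\|_k\le B$, and (ii) there is $\alpha\ge0$ such that for all $t_1<t_2$, $f_{t_1}(x)=f_{t_2}(x)+v_{t_1,t_2}$ with $v_{t_1,t_2}$ zero-mean sub-Gaussian of variance $\sigma^2(t_2-t_1)^\alpha$, independent across times. Fix a horizon $T$, and suppose that, relative to the target $f_T$, each main observation satisfies $y_t=f_T(x_t)+\epsilon_t$ with $\epsilon_t\sim\mathcal{N}(0,\sigma^2(1+(T-t)^\alpha))$, where $\alpha>1$. Consider any online algorithm $\pi$ that, at each step $t$, selects a main evaluation point $x_t$ and may additionally perform $n_t\ge0$ side queries (at arbitrary points of $\mathcal{D}$), for a total of $N_T=\sum_{t=1}^T n_t$ additional queries up to time $T$. If the sequence $(N_T)_{T\ge0}$ is bounded (i.e. there exists $C$ such that $N_T\le C$ for all $T$), then the expected cumulative dynamic regret $R_T=\sum_{t=1}^T\big(f_t(x_t^* )-f_t(x_t)\big)$, with $x_t^*=\arg\max_{x\in\mathcal{D}}f_t(x)$, satisfies (in the minimax sense over such instances) $$\mathbb{E}[R_T]\ge\Omega(T).$$ In other words, a uniformly bounded total number of additional queries is insufficient to guarantee sublinear regret.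
   Context: Time-varying Gaussian process bandit optimization in the frequentist setting, where temporal variation is modeled by uncertainty injection: past observations become noisier the further back in time they are, with variance growing as $(T-t)^\alpha$. The learner may supplement bandit feedback with additional (side) queries. *)

theory Defs
  imports "HOL-Probability.Probability"
begin

definition se_kernel :: "real \<Rightarrow> real \<Rightarrow> 'a::real_normed_vector \<Rightarrow> 'a \<Rightarrow> real" where
  "se_kernel Mk l x1 x2 = Mk\<^sup>2 * exp (- (norm (x2 - x1))\<^sup>2 / (2 * l\<^sup>2))"

definition kfun :: "('a \<Rightarrow> 'a \<Rightarrow> real) \<Rightarrow> (real \<times> 'a) list \<Rightarrow> 'a \<Rightarrow> real" where
  "kfun k ps x = (\<Sum>(c, z)\<leftarrow>ps. c * k z x)"

definition knorm2 :: "('a \<Rightarrow> 'a \<Rightarrow> real) \<Rightarrow> (real \<times> 'a) list \<Rightarrow> real" where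
  "knorm2 k ps = (\<Sum>(c, z)\<leftarrow>ps. \<Sum>(c', z')\<leftarrow>ps. c * c' * k z z')"

definition kneg :: "(real \<times> 'a) list \<Rightarrow> (real \<times> 'a) list" where
  "kneg ps = map (\<lambda>(c, z). (- c, z)) ps"

text \<open>f (restricted to D) belongs to the RKHS H_k(D) with norm at most B:
  f is the pointwise limit on D of a sequence of finite kernel expansions
  (centres in D) that is Cauchy in the pre-Hilbert norm, and the limit of
  the norms (= the RKHS norm of f) is at most B.\<close>

definition rkhs_ball :: "('a \<Rightarrow> 'a \<Rightarrow> real) \<Rightarrow> 'a set \<Rightarrow> real \<Rightarrow> ('a \<Rightarrow> real) \<Rightarrow> bool" where
  "rkhs_ball k D B f \<longleftrightarrow>
     (\<exists>P :: nat \<Rightarrow> (real \<times> 'a) list.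
        (\<forall>n. snd ` set (P n) \<subseteq> D) \<and>
        (\<forall>\<epsilon>>0. \<exists>N. \<forall>m\<ge>N. \<forall>n\<ge>N. knorm2 k (P m @ kneg (P n)) < \<epsilon>) \<and>
        (\<forall>x\<in>D. (\<lambda>n. kfun k (P n) x) \<longlonglongrightarrow> f x) \<and>
        (\<exists>L. (\<lambda>n. sqrt (knorm2 k (P n))) \<longlonglongrightarrow> L \<and> L \<le> B))"

text \<open>Randomness: w (internal randomisation of the algorithm) and z (observation
  noise), both i.i.d. standard normal sequences.\<close>

definition std_normal_measure :: "real measure" where
  "std_normal_measure = density lborel std_normal_density"

definition seq_measure :: "(nat \<Rightarrow> real) measure" where
  "seq_measure = PiM UNIV (\<lambda>_. std_normal_measure)"

definition seq_borel :: "(nat \<Rightarrow> real) measure" where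
  "seq_borel = PiM UNIV (\<lambda>_. borel)"

text \<open>An algorithm is given by query rules: the i-th query (i = 0,1,...) is
  a main evaluation if ismain i w ys, otherwise a side query, at point pt i w ys,
  where w is the internal randomness and ys the observations so far (only
  ys j with j < i may be used).  Admissible for horizon T with side-query budget C:
  points in D, non-anticipating, measurable, and at most C side queries are
  made before the T-th main query.\<close>

definition admissible_alg ::
  "'a::topological_space set \<Rightarrow> nat \<Rightarrow> nat \<Rightarrow>
   (nat \<Rightarrow> (nat \<Rightarrow> real) \<Rightarrow> (nat \<Rightarrow> real) \<Rightarrow> bool) \<Rightarrow>
   (nat \<Rightarrow> (nat \<Rightarrow> real) \<Rightarrow> (nat \<Rightarrow> real) \<Rightarrow> 'a) \<Rightarrow> bool" where
  "admissible_alg D C T ismain pt \<longleftrightarrow>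
     (\<forall>i w ys. pt i w ys \<in> D) \<and>
     (\<forall>i w ys ys'. (\<forall>j<i. ys j = ys' j) \<longrightarrow>
          ismain i w ys = ismain i w ys' \<and> pt i w ys = pt i w ys') \<and>
     (\<forall>i. (\<lambda>(w, ys). pt i w ys) \<in> borel_measurable (seq_borel \<Otimes>\<^sub>M seq_borel)) \<and>
     (\<forall>i. (\<lambda>(w, ys). ismain i w ys) \<in> measurable (seq_borel \<Otimes>\<^sub>M seq_borel) (count_space UNIV)) \<and>
     (\<forall>w ys. T \<le> card {i. i < T + C \<and> ismain i w ys})"

definition step_of :: "(nat \<Rightarrow> (nat \<Rightarrow> real) \<Rightarrow> (nat \<Rightarrow> real) \<Rightarrow> bool) \<Rightarrow>
    nat \<Rightarrow> (nat \<Rightarrow> real) \<Rightarrow> (nat \<Rightarrow> real) \<Rightarrow> nat" where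
  "step_of ismain i w ys = Suc (card {j. j < i \<and> ismain j w ys})"

text \<open>Observations: a query at step s (of horizon T) at point x returns
  f x + eps with eps ~ N(0, sigma^2 (1 + (T - s)^alpha)), independently.\<close>

fun obs_list ::
  "('a \<Rightarrow> real) \<Rightarrow> real \<Rightarrow> real \<Rightarrow> nat \<Rightarrow>
   (nat \<Rightarrow> (nat \<Rightarrow> real) \<Rightarrow> (nat \<Rightarrow> real) \<Rightarrow> bool) \<Rightarrow>
   (nat \<Rightarrow> (nat \<Rightarrow> real) \<Rightarrow> (nat \<Rightarrow> real) \<Rightarrow> 'a) \<Rightarrow>
   (nat \<Rightarrow> real) \<Rightarrow> (nat \<Rightarrow> real) \<Rightarrow> nat \<Rightarrow> real list" where
  "obs_list f \<sigma> \<alpha> T ismain pt w z 0 = []"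
| "obs_list f \<sigma> \<alpha> T ismain pt w z (Suc i) =
     (let h = obs_list f \<sigma> \<alpha> T ismain pt w z i;
          ys = (\<lambda>j. if j < i then h ! j else 0);
          s = step_of ismain i w ys
      in h @ [f (pt i w ys) + \<sigma> * sqrt (1 + real (T - s) powr \<alpha>) * z i])"

definition obs_seq ::
  "('a \<Rightarrow> real) \<Rightarrow> real \<Rightarrow> real \<Rightarrow> nat \<Rightarrow>
   (nat \<Rightarrow> (nat \<Rightarrow> real) \<Rightarrow> (nat \<Rightarrow> real) \<Rightarrow> bool) \<Rightarrow>
   (nat \<Rightarrow> (nat \<Rightarrow> real) \<Rightarrow> (nat \<Rightarrow> real) \<Rightarrow> 'a) \<Rightarrow>
   (nat \<Rightarrow> real) \<Rightarrow> (nat \<Rightarrow> real) \<Rightarrow> nat \<Rightarrow> real" where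
  "obs_seq f \<sigma> \<alpha> T ismain pt w z i = obs_list f \<sigma> \<alpha> T ismain pt w z (Suc i) ! i"

text \<open>Cumulative regret over the first T main queries (steps 1..T).\<close>

definition regret ::
  "'a set \<Rightarrow> ('a \<Rightarrow> real) \<Rightarrow> nat \<Rightarrow> nat \<Rightarrow>
   (nat \<Rightarrow> (nat \<Rightarrow> real) \<Rightarrow> (nat \<Rightarrow> real) \<Rightarrow> bool) \<Rightarrow>
   (nat \<Rightarrow> (nat \<Rightarrow> real) \<Rightarrow> (nat \<Rightarrow> real) \<Rightarrow> 'a) \<Rightarrow>
   (nat \<Rightarrow> real) \<Rightarrow> (nat \<Rightarrow> real) \<Rightarrow> real" where
  "regret D f T C ismain pt w ys =
     (\<Sum>i<T + C. if ismain i w ys \<and> card {j. j < i \<and> ismain j w ys} < T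
                then (SUP x\<in>D. f x) - f (pt i w ys) else 0)"

definition expected_regret ::
  "'a set \<Rightarrow> ('a \<Rightarrow> real) \<Rightarrow> real \<Rightarrow> real \<Rightarrow> nat \<Rightarrow> nat \<Rightarrow>
   (nat \<Rightarrow> (nat \<Rightarrow> real) \<Rightarrow> (nat \<Rightarrow> real) \<Rightarrow> bool) \<Rightarrow>
   (nat \<Rightarrow> (nat \<Rightarrow> real) \<Rightarrow> (nat \<Rightarrow> real) \<Rightarrow> 'a) \<Rightarrow> real" where
  "expected_regret D f \<sigma> \<alpha> T C ismain pt =
     (\<integral>p. regret D f T C ismain pt (fst p)
            (obs_seq f \<sigma> \<alpha> T ismain pt (fst p) (snd p)) \<partial>(seq_measure \<Otimes>\<^sub>M seq_measure))"

end

theory Submission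
  imports Defs
begin

lemma N_prob: "prob_space std_normal_measure"
  unfolding std_normal_measure_def by (rule prob_space_normal_density) simp

lemma sets_N[measurable_cong]: "sets std_normal_measure = sets borel"
  unfolding std_normal_measure_def by simp

lemma space_N: "space std_normal_measure = UNIV"
  unfolding std_normal_measure_def by simp

lemma std_shift: "std_normal_density t * exp (D * t - D\<^sup>2 / 2) = std_normal_density (t - D)"
proof -
  have "exp (- t\<^sup>2 / 2) * exp (D * t - D\<^sup>2 / 2) = exp (- (t - D)\<^sup>2 / 2)"
    unfolding exp_add[symmetric] by (rule arg_cong[where f=exp]) (simp add: power2_diff field_simps)
  then show ?thesis unfolding std_normal_density_def by (simp add: mult.assoc)
qed

lemma N_shift:
  fixes h :: "real \<Rightarrow> ennreal"
  assumes [measurable]: "h \<in> borel_measurable borel"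
  shows "(\<integral>\<^sup>+ t. h t * ennreal (exp (D * t - D\<^sup>2 / 2)) \<partial>std_normal_measure)
       = (\<integral>\<^sup>+ t. h (t + D) \<partial>std_normal_measure)"
proof -
  have "(\<integral>\<^sup>+ t. h t * ennreal (exp (D * t - D\<^sup>2 / 2)) \<partial>std_normal_measure)
      = (\<integral>\<^sup>+ t. ennreal (std_normal_density t) * (h t * ennreal (exp (D * t - D\<^sup>2 / 2))) \<partial>lborel)"
    unfolding std_normal_measure_def by (subst nn_integral_density) auto
  also have "\<dots> = (\<integral>\<^sup>+ t. h t * ennreal (std_normal_density (t - D)) \<partial>lborel)"
    by (intro nn_integral_cong) (simp add: std_shift[symmetric] ennreal_mult' mult_ac)
  also have "\<dots> = (\<integral>\<^sup>+ t. ennreal (std_normal_density t) * h (t + D) \<partial>lborel)"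
    using nn_integral_real_affine[where c=1 and t=D and f="\<lambda>t. h t * ennreal (std_normal_density (t - D))"]
    by (simp add: add.commute mult.commute)
  also have "\<dots> = (\<integral>\<^sup>+ t. h (t + D) \<partial>std_normal_measure)"
    unfolding std_normal_measure_def by (subst nn_integral_density) auto
  finally show ?thesis .
qed

definition trunc :: "nat \<Rightarrow> (nat \<Rightarrow> real) \<Rightarrow> nat \<Rightarrow> real" where
  "trunc i y = (\<lambda>j. if j < i then y j else 0)"

definition causal :: "(nat \<Rightarrow> (nat \<Rightarrow> real) \<Rightarrow> real) \<Rightarrow> bool" where
  "causal m \<longleftrightarrow> (\<forall>i y y'. (\<forall>j<i. y j = y' j) \<longrightarrow> m i y = m i y')"

fun rl :: "(nat \<Rightarrow> (nat \<Rightarrow> real) \<Rightarrow> real) \<Rightarrow> (nat \<Rightarrow> (nat \<Rightarrow> real) \<Rightarrow> real) \<Rightarrow>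
   (nat \<Rightarrow> real) \<Rightarrow> nat \<Rightarrow> real list" where
  "rl m s z 0 = []"
| "rl m s z (Suc i) = (let h = rl m s z i; ys = (\<lambda>j. if j < i then h ! j else 0)
      in h @ [m i ys + s i ys * z i])"

definition run :: "(nat \<Rightarrow> (nat \<Rightarrow> real) \<Rightarrow> real) \<Rightarrow> (nat \<Rightarrow> (nat \<Rightarrow> real) \<Rightarrow> real) \<Rightarrow>
   (nat \<Rightarrow> real) \<Rightarrow> nat \<Rightarrow> real" where
  "run m s z i = rl m s z (Suc i) ! i"

lemma length_rl[simp]: "length (rl m s z i) = i"
  by (induction i) (simp_all add: Let_def)

lemma rl_nth: "j < i \<Longrightarrow> rl m s z i ! j = run m s z j"
proof (induction i)
  case 0 then show ?case by simp
next
  case (Suc i)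
  show ?case
  proof (cases "j < i")
    case True
    then show ?thesis using Suc by (simp add: Let_def nth_append)
  next
    case False
    then have "j = i" using Suc by simp
    then show ?thesis by (simp add: run_def)
  qed
qed

lemma run_eq: "run m s z i = m i (trunc i (run m s z)) + s i (trunc i (run m s z)) * z i"
proof -
  have "(\<lambda>j. if j < i then rl m s z i ! j else 0) = trunc i (run m s z)"
    by (auto simp: trunc_def rl_nth)
  then show ?thesis by (simp add: run_def Let_def nth_append)
qed

lemma causal_trunc: "causal m \<Longrightarrow> m i (trunc i y) = m i y"
  unfolding causal_def trunc_def by auto

lemma run_causal: "causal m \<Longrightarrow> causal s \<Longrightarrow> run m s z i = m i (run m s z) + s i (run m s z) * z i"
  by (subst run_eq) (simp add: causal_trunc)

lemma run_dep: "(\<And>j. j \<le> i \<Longrightarrow> z j = z' j) \<Longrightarrow> run m s z i = run m s z' i"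
proof (induction i arbitrary: rule: less_induct)
  case (less i)
  have "trunc i (run m s z) = trunc i (run m s z')"
    using less by (auto simp: trunc_def)
  then show ?case using less.prems by (subst (1 2) run_eq) simp
qed

lemma measurable_seq_borel:
  assumes "\<And>i. (\<lambda>x. F x i) \<in> borel_measurable M"
  shows "F \<in> measurable M seq_borel"
  unfolding seq_borel_def
  using measurable_PiM_single'[of UNIV "\<lambda>i x. F x i" M "\<lambda>_. borel"] assms by simp

lemma measurable_seq_borel_comp[measurable (raw)]:
  "F \<in> measurable M seq_borel \<Longrightarrow> (\<lambda>x. F x i) \<in> borel_measurable M"
  unfolding seq_borel_def by simp

lemma measurable_run:
  fixes m s :: "'w \<Rightarrow> nat \<Rightarrow> (nat \<Rightarrow> real) \<Rightarrow> real"
  assumes m: "\<And>i. (\<lambda>(w, y). m w i y) \<in> borel_measurable (W \<Otimes>\<^sub>M seq_borel)"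
    and s: "\<And>i. (\<lambda>(w, y). s w i y) \<in> borel_measurable (W \<Otimes>\<^sub>M seq_borel)"
    and z: "\<And>i. (\<lambda>z. z i) \<in> borel_measurable Z"
  shows "(\<lambda>(w, z). run (m w) (s w) z) \<in> measurable (W \<Otimes>\<^sub>M Z) seq_borel"
proof -
  have *: "(\<lambda>(w, z). run (m w) (s w) z i) \<in> borel_measurable (W \<Otimes>\<^sub>M Z)" for i
  proof (induction i rule: less_induct)
    case (less i)
    have tr: "(\<lambda>p. trunc i (run (m (fst p)) (s (fst p)) (snd p))) \<in> measurable (W \<Otimes>\<^sub>M Z) seq_borel"
    proof (rule measurable_seq_borel)
      fix j
      show "(\<lambda>p. trunc i (run (m (fst p)) (s (fst p)) (snd p)) j) \<in> borel_measurable (W \<Otimes>\<^sub>M Z)"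
      proof (cases "j < i")
        case True
        then show ?thesis using less[OF True] by (simp add: trunc_def split_beta')
      qed (simp add: trunc_def)
    qed
    have pm: "(\<lambda>p. (fst p, trunc i (run (m (fst p)) (s (fst p)) (snd p)))) \<in> measurable (W \<Otimes>\<^sub>M Z) (W \<Otimes>\<^sub>M seq_borel)"
      using tr by (intro measurable_Pair) auto
    have m': "(\<lambda>p. m (fst p) i (trunc i (run (m (fst p)) (s (fst p)) (snd p)))) \<in> borel_measurable (W \<Otimes>\<^sub>M Z)"
      using measurable_comp[OF pm m[of i]] by (simp add: comp_def)
    have s': "(\<lambda>p. s (fst p) i (trunc i (run (m (fst p)) (s (fst p)) (snd p)))) \<in> borel_measurable (W \<Otimes>\<^sub>M Z)"
      using measurable_comp[OF pm s[of i]] by (simp add: comp_def)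
    have z': "(\<lambda>p. snd p i) \<in> borel_measurable (W \<Otimes>\<^sub>M Z)"
      using measurable_comp[OF measurable_snd z[of i]] by (simp add: comp_def)
    show ?case
      by (subst run_eq[abs_def]) (simp add: split_beta' m' s' z' borel_measurable_add borel_measurable_times)
  qed
  show ?thesis
    by (rule measurable_seq_borel) (use * in \<open>simp add: split_beta'\<close>)
qed

lemma measurable_coord_PiM:
  "(\<lambda>z. z i) \<in> borel_measurable (PiM I (\<lambda>_. std_normal_measure))"
proof (cases "i \<in> I")
  case True
  then show ?thesis
    using measurable_component_singleton[of i I "\<lambda>_. std_normal_measure"]
    by (simp add: measurable_cong_sets[OF refl sets_N])
next
  case False
  have "\<And>z. z \<in> space (PiM I (\<lambda>_. std_normal_measure)) \<Longrightarrow> z i = undefined"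
    using False by (auto simp: space_PiM PiE_def extensional_def)
  then show ?thesis by (subst measurable_cong[where g="\<lambda>_. undefined"]) auto
qed

abbreviation N where "N \<equiv> std_normal_measure"
abbreviation Zn :: "nat \<Rightarrow> (nat \<Rightarrow> real) measure" where "Zn n \<equiv> PiM {..<n} (\<lambda>_. N)"

lemma space_seq_borel[simp]: "space seq_borel = UNIV"
  by (simp add: seq_borel_def space_PiM)

lemma measurable_N: "measurable N M = measurable borel M"
  by (rule measurable_cong_sets) (simp_all add: sets_N)

lemma N_sf: "sigma_finite_measure N"
  by (rule prob_space_imp_sigma_finite[OF N_prob])

interpretation NN: product_sigma_finite "\<lambda>_::nat. N"
  unfolding product_sigma_finite_def using N_sf by simp

lemma measurable_run1:
  assumes m: "\<And>i. m i \<in> borel_measurable seq_borel"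
    and s: "\<And>i. s i \<in> borel_measurable seq_borel"
    and z: "\<And>i. (\<lambda>z. z i) \<in> borel_measurable Z"
  shows "run m s \<in> measurable Z seq_borel"
proof -
  have "(\<lambda>(w::unit, z). run ((\<lambda>_. m) w) ((\<lambda>_. s) w) z) \<in> measurable (count_space UNIV \<Otimes>\<^sub>M Z) seq_borel"
    by (rule measurable_run) (auto intro: measurable_compose[OF measurable_snd] m s z simp: split_beta')
  moreover have "(\<lambda>z. ((), z)) \<in> measurable Z (count_space UNIV \<Otimes>\<^sub>M Z)"
    by (intro measurable_Pair) auto
  ultimately have "(\<lambda>(w::unit, z). run ((\<lambda>_. m) w) ((\<lambda>_. s) w) z) \<circ> (\<lambda>z. ((), z)) \<in> measurable Z seq_borel"
    by (intro measurable_comp) 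
  then show ?thesis by (simp add: comp_def)
qed

lemma measurable_upd_seq[measurable]:
  assumes "F \<in> measurable M seq_borel" "v \<in> borel_measurable M"
  shows "(\<lambda>x. (F x)(n := v x)) \<in> measurable M seq_borel"
  by (rule measurable_seq_borel) (use assms in auto)

definition Dg where
  "Dg ma mb s i z = (ma i (run mb s z) - mb i (run mb s z)) / s i (run mb s z)"

definition Lg where
  "Lg ma mb s n z = exp (\<Sum>i<n. Dg ma mb s i z * z i - (Dg ma mb s i z)\<^sup>2 / 2)"

lemma causal_eq: "causal m \<Longrightarrow> (\<And>j. j < i \<Longrightarrow> y j = y' j) \<Longrightarrow> m i y = m i y'"
  unfolding causal_def by blast

lemma run_upd_less: "j < n \<Longrightarrow> run m s (z(n := t)) j = run m s z j"
  by (rule run_dep) auto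

lemma girsanov:
  assumes ca: "causal ma" and cb: "causal mb" and cs: "causal s"
    and spos: "\<And>i y. s i y > 0"
    and ma[measurable]: "\<And>i. ma i \<in> borel_measurable seq_borel"
    and mb[measurable]: "\<And>i. mb i \<in> borel_measurable seq_borel"
    and sm[measurable]: "\<And>i. s i \<in> borel_measurable seq_borel"
  shows "g \<in> borel_measurable seq_borel \<Longrightarrow> (\<And>y y'. (\<And>j. j < n \<Longrightarrow> y j = y' j) \<Longrightarrow> g y = g y') \<Longrightarrow>
    (\<integral>\<^sup>+ z. g (run ma s z) \<partial>Zn n) = (\<integral>\<^sup>+ z. g (run mb s z) * ennreal (Lg ma mb s n z) \<partial>Zn n)"
proof (induction n arbitrary: g)
  case 0
  have "g (run ma s z) = g (run mb s z)" for z using 0(2) by blast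
  then show ?case by (simp add: Lg_def)
next
  case (Suc n)
  note gm[measurable] = Suc.prems(1)
  have runa[measurable]: "run ma s \<in> measurable (Zn k) seq_borel" for k
    by (rule measurable_run1) (auto intro: measurable_coord_PiM)
  have runb[measurable]: "run mb s \<in> measurable (Zn k) seq_borel" for k
    by (rule measurable_run1) (auto intro: measurable_coord_PiM)
  note coord[measurable] = measurable_coord_PiM
  define Ha where "Ha y = (\<integral>\<^sup>+ t. g (y(n := ma n y + s n y * t)) \<partial>N)" for y
  have Ha_m[measurable]: "Ha \<in> borel_measurable seq_borel"
  proof -
    have "(\<lambda>p. g ((fst p)(n := ma n (fst p) + s n (fst p) * snd p))) \<in> borel_measurable (seq_borel \<Otimes>\<^sub>M N)"
      by measurable
    then show ?thesis unfolding Ha_def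
      using sigma_finite_measure.borel_measurable_nn_integral_fst[OF N_sf, of "\<lambda>p. g ((fst p)(n := ma n (fst p) + s n (fst p) * snd p))" seq_borel]
      by simp
  qed
  have Ha_dep: "Ha y = Ha y'" if "\<And>j. j < n \<Longrightarrow> y j = y' j" for y y'
  proof -
    have "ma n y = ma n y'" by (rule causal_eq[OF ca]) (rule that)
    moreover have "s n y = s n y'" by (rule causal_eq[OF cs]) (rule that)
    moreover have "g (y(n := v)) = g (y'(n := v))" for v
      by (rule Suc.prems(2)) (use that in auto)
    ultimately show ?thesis unfolding Ha_def by simp
  qed
  have ins: "{..<Suc n} = insert n {..<n}" by auto
  have L1: "(\<integral>\<^sup>+ z. g (run ma s z) \<partial>Zn (Suc n)) = (\<integral>\<^sup>+ z. Ha (run ma s z) \<partial>Zn n)"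
  proof -
    have "(\<integral>\<^sup>+ z. g (run ma s z) \<partial>Zn (Suc n)) = (\<integral>\<^sup>+ z. \<integral>\<^sup>+ t. g (run ma s (z(n := t))) \<partial>N \<partial>Zn n)"
      unfolding ins
    proof (rule NN.product_nn_integral_insert)
      show "(\<lambda>z. g (run ma s z)) \<in> borel_measurable (PiM (insert n {..<n}) (\<lambda>_. N))"
        unfolding ins[symmetric] by measurable
    qed auto
    also have "\<dots> = (\<integral>\<^sup>+ z. Ha (run ma s z) \<partial>Zn n)"
    proof (intro nn_integral_cong)
      fix z
      have "g (run ma s (z(n := t))) = g ((run ma s z)(n := ma n (run ma s z) + s n (run ma s z) * t))" for t
      proof (rule Suc.prems(2))
        fix j assume "j < Suc n"
        then consider "j < n" | "j = n" by linarith
        then show "run ma s (z(n := t)) j = ((run ma s z)(n := ma n (run ma s z) + s n (run ma s z) * t)) j"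
        proof cases
          case 1 then show ?thesis by (simp add: run_upd_less)
        next
          case 2
          have "ma n (run ma s (z(n := t))) = ma n (run ma s z)" "s n (run ma s (z(n := t))) = s n (run ma s z)"
            by (auto intro!: causal_eq[OF ca] causal_eq[OF cs] simp: run_upd_less)
          then show ?thesis using 2 by (subst run_causal[OF ca cs]) simp
        qed
      qed
      then show "(\<integral>\<^sup>+ t. g (run ma s (z(n := t))) \<partial>N) = Ha (run ma s z)"
        unfolding Ha_def by simp
    qed
    finally show ?thesis .
  qed
  have L2: "(\<integral>\<^sup>+ z. g (run mb s z) * ennreal (Lg ma mb s (Suc n) z) \<partial>Zn (Suc n))
      = (\<integral>\<^sup>+ z. Ha (run mb s z) * ennreal (Lg ma mb s n z) \<partial>Zn n)"
  proof -
    have Dg_m[measurable]: "(\<lambda>z. Dg ma mb s i z) \<in> borel_measurable (Zn k)" for i k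
      unfolding Dg_def by measurable
    have Lg_m[measurable]: "(\<lambda>z. Lg ma mb s k z) \<in> borel_measurable (Zn k')" for k k'
      unfolding Lg_def by measurable
    have "(\<integral>\<^sup>+ z. g (run mb s z) * ennreal (Lg ma mb s (Suc n) z) \<partial>Zn (Suc n))
       = (\<integral>\<^sup>+ z. \<integral>\<^sup>+ t. g (run mb s (z(n := t))) * ennreal (Lg ma mb s (Suc n) (z(n := t))) \<partial>N \<partial>Zn n)"
      unfolding ins
    proof (rule NN.product_nn_integral_insert)
      show "(\<lambda>z. g (run mb s z) * ennreal (Lg ma mb s (Suc n) z)) \<in> borel_measurable (PiM (insert n {..<n}) (\<lambda>_. N))"
        unfolding ins[symmetric] by measurable
    qed auto
    also have "\<dots> = (\<integral>\<^sup>+ z. Ha (run mb s z) * ennreal (Lg ma mb s n z) \<partial>Zn n)"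
    proof (intro nn_integral_cong)
      fix z :: "nat \<Rightarrow> real"
      define y where "y = run mb s z"
      define D where "D = Dg ma mb s n z"
      have Lpos: "Lg ma mb s k x \<ge> 0" for k x unfolding Lg_def by simp
      have Dup: "Dg ma mb s i (z(n := t)) = Dg ma mb s i z" if "i \<le> n" for i t
      proof -
        have "ma i (run mb s (z(n := t))) = ma i (run mb s z)" "mb i (run mb s (z(n := t))) = mb i (run mb s z)"
             "s i (run mb s (z(n := t))) = s i (run mb s z)"
          using that by (auto intro!: causal_eq[OF ca] causal_eq[OF cb] causal_eq[OF cs] simp: run_upd_less)
        then show ?thesis unfolding Dg_def by simp
      qed
      have Lup: "Lg ma mb s (Suc n) (z(n := t)) = Lg ma mb s n z * exp (D * t - D\<^sup>2 / 2)" for t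
      proof -
        have "(\<Sum>i<n. Dg ma mb s i (z(n := t)) * (z(n := t)) i - (Dg ma mb s i (z(n := t)))\<^sup>2 / 2)
            = (\<Sum>i<n. Dg ma mb s i z * z i - (Dg ma mb s i z)\<^sup>2 / 2)"
          by (intro sum.cong) (auto simp: Dup)
        then show ?thesis unfolding Lg_def D_def by (simp add: Dup exp_add)
      qed
      have gup: "g (run mb s (z(n := t))) = g (y(n := mb n y + s n y * t))" for t
      proof (rule Suc.prems(2))
        fix j assume "j < Suc n"
        then consider "j < n" | "j = n" by linarith
        then show "run mb s (z(n := t)) j = (y(n := mb n y + s n y * t)) j"
        proof cases
          case 1 then show ?thesis by (simp add: run_upd_less y_def)
        next
          case 2
          have "mb n (run mb s (z(n := t))) = mb n y" "s n (run mb s (z(n := t))) = s n y"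
            by (auto intro!: causal_eq[OF cb] causal_eq[OF cs] simp: run_upd_less y_def)
          then show ?thesis using 2 by (subst run_causal[OF cb cs]) simp
        qed
      qed
      have sD: "s n y * D = ma n y - mb n y"
        using spos[of n y] unfolding D_def Dg_def y_def by simp
      have "(\<integral>\<^sup>+ t. g (run mb s (z(n := t))) * ennreal (Lg ma mb s (Suc n) (z(n := t))) \<partial>N)
          = (\<integral>\<^sup>+ t. ennreal (Lg ma mb s n z) * (g (y(n := mb n y + s n y * t)) * ennreal (exp (D * t - D\<^sup>2 / 2))) \<partial>N)"
        by (intro nn_integral_cong) (simp add: gup Lup ennreal_mult Lpos mult_ac)
      also have "\<dots> = ennreal (Lg ma mb s n z) * (\<integral>\<^sup>+ t. g (y(n := mb n y + s n y * t)) * ennreal (exp (D * t - D\<^sup>2 / 2)) \<partial>N)"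
        by (rule nn_integral_cmult) (unfold measurable_N, measurable)
      also have "(\<integral>\<^sup>+ t. g (y(n := mb n y + s n y * t)) * ennreal (exp (D * t - D\<^sup>2 / 2)) \<partial>N)
          = (\<integral>\<^sup>+ t. g (y(n := mb n y + s n y * (t + D))) \<partial>N)"
        by (rule N_shift) measurable
      also have "\<dots> = Ha y"
      proof -
        have "mb n y + s n y * (t + D) = ma n y + s n y * t" for t
          using sD by (simp add: algebra_simps)
        then show ?thesis unfolding Ha_def by simp
      qed
      finally show "(\<integral>\<^sup>+ t. g (run mb s (z(n := t))) * ennreal (Lg ma mb s (Suc n) (z(n := t))) \<partial>N)
          = Ha (run mb s z) * ennreal (Lg ma mb s n z)"
        unfolding y_def by (simp only: mult.commute)
    qed
    finally show ?thesis .
  qed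
  show ?case
    unfolding L1 L2 by (rule Suc.IH[OF Ha_m Ha_dep])
qed

lemma Zn_prob: "prob_space (Zn n)"
  by (rule prob_space_PiM) (rule N_prob)

lemma amgm:
  fixes e u :: real assumes "e > 0"
  shows "2 * e * exp u \<le> min (exp (2 * u)) 1 + e\<^sup>2 * (1 + exp (2 * u))"
proof -
  have e2: "exp (2 * u) = (exp u)\<^sup>2" by (simp add: power2_eq_square exp_add[symmetric])
  have "0 \<le> (exp u - e)\<^sup>2" "0 \<le> (e * exp u - 1)\<^sup>2" by simp_all
  then have a: "2 * e * exp u \<le> (exp u)\<^sup>2 + e\<^sup>2" and b: "2 * e * exp u \<le> 1 + e\<^sup>2 * (exp u)\<^sup>2"
    by (simp_all add: power2_diff power_mult_distrib algebra_simps)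
  have c: "0 \<le> e\<^sup>2 * (exp u)\<^sup>2" by simp
  have d: "0 \<le> e\<^sup>2" by simp
  show ?thesis
  proof (cases "(exp u)\<^sup>2 \<le> 1")
    case True
    then have "min ((exp u)\<^sup>2) 1 = (exp u)\<^sup>2" by simp
    moreover have "e\<^sup>2 * (1 + (exp u)\<^sup>2) = e\<^sup>2 + e\<^sup>2 * (exp u)\<^sup>2" by (simp add: algebra_simps)
    ultimately show ?thesis unfolding e2 using a c by linarith
  next
    case False
    then have "min ((exp u)\<^sup>2) 1 = 1" by simp
    moreover have "e\<^sup>2 * (1 + (exp u)\<^sup>2) = e\<^sup>2 + e\<^sup>2 * (exp u)\<^sup>2" by (simp add: algebra_simps)
    ultimately show ?thesis unfolding e2 using b d by linarith
  qed
qed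

locale gsetup =
  fixes ma mb s :: "nat \<Rightarrow> (nat \<Rightarrow> real) \<Rightarrow> real"
  assumes ca: "causal ma" and cb: "causal mb" and cs: "causal s"
    and spos: "\<And>i y. s i y > 0"
    and ma[measurable]: "\<And>i. ma i \<in> borel_measurable seq_borel"
    and mb[measurable]: "\<And>i. mb i \<in> borel_measurable seq_borel"
    and sm[measurable]: "\<And>i. s i \<in> borel_measurable seq_borel"
begin

definition mc where "mc i y = (ma i y + mb i y) / 2"

lemma cc: "causal mc"
  using ca cb unfolding causal_def mc_def by metis

lemma mc_m[measurable]: "mc i \<in> borel_measurable seq_borel"
  unfolding mc_def[abs_def] by measurable

lemma runb[measurable]: "run mb s \<in> measurable (Zn k) seq_borel"
  by (rule measurable_run1) (auto intro: measurable_coord_PiM)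
lemma runa[measurable]: "run ma s \<in> measurable (Zn k) seq_borel"
  by (rule measurable_run1) (auto intro: measurable_coord_PiM)

lemma Dg_m[measurable]: "(\<lambda>z. Dg ma mb s i z) \<in> borel_measurable (Zn k)"
  unfolding Dg_def
  by (intro borel_measurable_diff borel_measurable_divide measurable_compose[OF runb ma] measurable_compose[OF runb mb] measurable_compose[OF runb sm])
lemma Lg_m[measurable]: "(\<lambda>z. Lg ma mb s n z) \<in> borel_measurable (Zn k)"
  unfolding Lg_def
  by (intro measurable_compose[OF _ borel_measurable_exp] borel_measurable_sum borel_measurable_diff
      borel_measurable_times borel_measurable_divide borel_measurable_power Dg_m measurable_coord_PiM measurable_const) auto
lemma Dgc_m[measurable]: "(\<lambda>z. Dg mc mb s i z) \<in> borel_measurable (Zn k)"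
  unfolding Dg_def
  by (intro borel_measurable_diff borel_measurable_divide measurable_compose[OF runb mc_m] measurable_compose[OF runb mb] measurable_compose[OF runb sm])
lemma Lgc_m[measurable]: "(\<lambda>z. Lg mc mb s n z) \<in> borel_measurable (Zn k)"
  unfolding Lg_def
  by (intro measurable_compose[OF _ borel_measurable_exp] borel_measurable_sum borel_measurable_diff
      borel_measurable_times borel_measurable_divide borel_measurable_power Dgc_m measurable_coord_PiM measurable_const) auto

lemma gir:
  assumes "g \<in> borel_measurable seq_borel" "\<And>y y'. (\<And>j. j < n \<Longrightarrow> y j = y' j) \<Longrightarrow> g y = g y'"
  shows "(\<integral>\<^sup>+ z. g (run ma s z) \<partial>Zn n) = (\<integral>\<^sup>+ z. g (run mb s z) * ennreal (Lg ma mb s n z) \<partial>Zn n)"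
  by (rule girsanov[OF ca cb cs spos ma mb sm assms])

lemma Lg_int: "(\<integral>\<^sup>+ z. ennreal (Lg ma mb s n z) \<partial>Zn n) = 1"
proof -
  have "(\<integral>\<^sup>+ z. (\<lambda>_. 1::ennreal) (run ma s z) \<partial>Zn n) = (\<integral>\<^sup>+ z. (\<lambda>_. 1) (run mb s z) * ennreal (Lg ma mb s n z) \<partial>Zn n)"
    by (rule gir) auto
  then show ?thesis using prob_space.emeasure_space_1[OF Zn_prob] by simp
qed

lemma Lgc_int: "(\<integral>\<^sup>+ z. ennreal (Lg mc mb s n z) \<partial>Zn n) = 1"
proof -
  have "(\<integral>\<^sup>+ z. (\<lambda>_. 1::ennreal) (run mc s z) \<partial>Zn n) = (\<integral>\<^sup>+ z. (\<lambda>_. 1) (run mb s z) * ennreal (Lg mc mb s n z) \<partial>Zn n)"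
    by (rule girsanov[OF cc cb cs spos mc_m mb sm]) auto
  then show ?thesis using prob_space.emeasure_space_1[OF Zn_prob] by simp
qed

lemma Dgc: "Dg mc mb s i z = Dg ma mb s i z / 2"
  unfolding Dg_def mc_def by (simp add: field_simps)

lemma key:
  fixes Ra Rb :: "(nat \<Rightarrow> real) \<Rightarrow> real" and \<Delta> K :: real
  assumes Ra[measurable]: "Ra \<in> borel_measurable seq_borel" and Rb[measurable]: "Rb \<in> borel_measurable seq_borel"
    and Ra0: "\<And>y. Ra y \<ge> 0" and Rb0: "\<And>y. Rb y \<ge> 0"
    and Rsum: "\<And>y. Ra y + Rb y \<ge> \<Delta>" and \<Delta>0: "\<Delta> \<ge> 0"
    and Radep: "\<And>y y'. (\<And>j. j < n \<Longrightarrow> y j = y' j) \<Longrightarrow> Ra y = Ra y'"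
    and Kb: "\<And>z. (\<Sum>i<n. (Dg ma mb s i z)\<^sup>2) \<le> K"
  shows "(\<integral>\<^sup>+ z. ennreal (Ra (run ma s z)) \<partial>Zn n) + (\<integral>\<^sup>+ z. ennreal (Rb (run mb s z)) \<partial>Zn n)
          \<ge> ennreal (\<Delta> * exp (- K / 4) / 2)"
proof -
  define h where "h = exp (- K / 8)"
  define e where "e = h / 2"
  have hpos: "h > 0" and epos: "e > 0" unfolding h_def e_def by simp_all
  define L where "L z = Lg ma mb s n z" for z
  define Q where "Q z = Lg mc mb s n z" for z
  define u where "u z = (\<Sum>i<n. Dg ma mb s i z * z i - (Dg ma mb s i z)\<^sup>2 / 2) / 2" for z
  have L_u: "L z = exp (2 * u z)" for z unfolding L_def Lg_def u_def by simp
  have u_Q: "exp (u z) \<ge> h * Q z" for z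
  proof -
    have "u z = (\<Sum>i<n. Dg mc mb s i z * z i - (Dg mc mb s i z)\<^sup>2 / 2) + (- (\<Sum>i<n. (Dg ma mb s i z)\<^sup>2) / 8)"
    proof -
      have "u z = (\<Sum>i<n. (Dg ma mb s i z * z i - (Dg ma mb s i z)\<^sup>2 / 2) / 2)"
        unfolding u_def by (simp add: sum_divide_distrib)
      also have "\<dots> = (\<Sum>i<n. (Dg ma mb s i z / 2 * z i - (Dg ma mb s i z / 2)\<^sup>2 / 2) - (Dg ma mb s i z)\<^sup>2 / 8)"
        by (intro sum.cong) (auto simp: power_divide field_simps)
      also have "\<dots> = (\<Sum>i<n. Dg ma mb s i z / 2 * z i - (Dg ma mb s i z / 2)\<^sup>2 / 2) - (\<Sum>i<n. (Dg ma mb s i z)\<^sup>2) / 8"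
        by (simp add: sum_subtractf sum_divide_distrib)
      finally show ?thesis unfolding Dgc by simp
    qed
    then have "exp (u z) = Q z * exp (- (\<Sum>i<n. (Dg ma mb s i z)\<^sup>2) / 8)"
      unfolding Q_def Lg_def by (simp add: exp_add[symmetric])
    moreover have "exp (- (\<Sum>i<n. (Dg ma mb s i z)\<^sup>2) / 8) \<ge> h"
      unfolding h_def using Kb[of z] by simp
    moreover have "Q z \<ge> 0" unfolding Q_def Lg_def by simp
    ultimately show ?thesis by (metis mult.commute mult_left_mono)
  qed
  have pw: "2 * e * \<Delta> * h * Q z \<le> Ra (run mb s z) * L z + Rb (run mb s z) + \<Delta> * e\<^sup>2 + \<Delta> * e\<^sup>2 * L z" for z
  proof -
    let ?a = "Ra (run mb s z)" and ?b = "Rb (run mb s z)"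
    have L0: "L z \<ge> 0" unfolding L_u by simp
    have "?a * L z + ?b \<ge> min (L z) 1 * (?a + ?b)"
    proof (cases "L z \<le> 1")
      case True
      have "L z * ?b \<le> 1 * ?b" using True Rb0 by (intro mult_right_mono) auto
      then show ?thesis using True by (simp add: min_def algebra_simps)
    next
      case False
      have "1 * ?a \<le> L z * ?a" using False Ra0 by (intro mult_right_mono) auto
      then show ?thesis using False by (simp add: min_def algebra_simps)
    qed
    also have "min (L z) 1 * (?a + ?b) \<ge> min (L z) 1 * \<Delta>"
      using Rsum L0 by (intro mult_left_mono) auto
    finally have 1: "?a * L z + ?b \<ge> min (L z) 1 * \<Delta>" .
    have "2 * e * exp (u z) \<le> min (L z) 1 + e\<^sup>2 * (1 + L z)"
      unfolding L_u by (rule amgm[OF epos])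
    then have "\<Delta> * (2 * e * exp (u z)) \<le> \<Delta> * (min (L z) 1 + e\<^sup>2 * (1 + L z))"
      using \<Delta>0 by (rule mult_left_mono)
    moreover have "\<Delta> * (2 * e * (h * Q z)) \<le> \<Delta> * (2 * e * exp (u z))"
      using u_Q[of z] \<Delta>0 epos by (intro mult_left_mono) auto
    ultimately show ?thesis using 1 by (simp add: algebra_simps)
  qed
  have "ennreal (2 * e * \<Delta> * h) = (\<integral>\<^sup>+ z. ennreal (2 * e * \<Delta> * h * Q z) \<partial>Zn n)"
  proof -
    have "(\<integral>\<^sup>+ z. ennreal (2 * e * \<Delta> * h * Q z) \<partial>Zn n) = (\<integral>\<^sup>+ z. ennreal (2 * e * \<Delta> * h) * ennreal (Q z) \<partial>Zn n)"
      using epos hpos \<Delta>0 by (intro nn_integral_cong) (simp add: ennreal_mult Q_def Lg_def)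
    also have "\<dots> = ennreal (2 * e * \<Delta> * h) * (\<integral>\<^sup>+ z. ennreal (Q z) \<partial>Zn n)"
      by (rule nn_integral_cmult) (simp add: Q_def)
    finally show ?thesis unfolding Q_def Lgc_int by simp
  qed
  also have "\<dots> \<le> (\<integral>\<^sup>+ z. ennreal (Ra (run mb s z) * L z) + ennreal (Rb (run mb s z)) + ennreal (\<Delta> * e\<^sup>2) + ennreal (\<Delta> * e\<^sup>2) * ennreal (L z) \<partial>Zn n)"
  proof (intro nn_integral_mono)
    fix z
    have L0: "L z \<ge> 0" unfolding L_u by simp
    have "ennreal (2 * e * \<Delta> * h * Q z) \<le> ennreal (Ra (run mb s z) * L z + Rb (run mb s z) + \<Delta> * e\<^sup>2 + \<Delta> * e\<^sup>2 * L z)"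
      using pw by (rule ennreal_leI)
    also have "\<dots> = ennreal (Ra (run mb s z) * L z) + ennreal (Rb (run mb s z)) + ennreal (\<Delta> * e\<^sup>2) + ennreal (\<Delta> * e\<^sup>2) * ennreal (L z)"
      using Ra0 Rb0 L0 \<Delta>0 by (simp add: ennreal_plus[symmetric] ennreal_mult[symmetric] del: ennreal_plus)
    finally show "ennreal (2 * e * \<Delta> * h * Q z) \<le> \<dots>" .
  qed
  also have "\<dots> = (\<integral>\<^sup>+ z. ennreal (Ra (run mb s z) * L z) \<partial>Zn n) + (\<integral>\<^sup>+ z. ennreal (Rb (run mb s z)) \<partial>Zn n)
        + ennreal (\<Delta> * e\<^sup>2) + ennreal (\<Delta> * e\<^sup>2) * (\<integral>\<^sup>+ z. ennreal (L z) \<partial>Zn n)"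
    using prob_space.emeasure_space_1[OF Zn_prob]
    by (simp add: nn_integral_add nn_integral_cmult L_def)
  also have "(\<integral>\<^sup>+ z. ennreal (Ra (run mb s z) * L z) \<partial>Zn n) = (\<integral>\<^sup>+ z. ennreal (Ra (run ma s z)) \<partial>Zn n)"
  proof -
    have "(\<integral>\<^sup>+ z. ennreal (Ra (run ma s z)) \<partial>Zn n) = (\<integral>\<^sup>+ z. ennreal (Ra (run mb s z)) * ennreal (L z) \<partial>Zn n)"
      unfolding L_def proof (rule gir[where g="\<lambda>y. ennreal (Ra y)"])
        fix y y' :: "nat \<Rightarrow> real" assume "\<And>j. j < n \<Longrightarrow> y j = y' j"
        then show "ennreal (Ra y) = ennreal (Ra y')" using Radep by metis
      qed simp
    then show ?thesis using Ra0 by (simp add: ennreal_mult L_u)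
  qed
  finally have "ennreal (2 * e * \<Delta> * h) \<le> (\<integral>\<^sup>+ z. ennreal (Ra (run ma s z)) \<partial>Zn n) + (\<integral>\<^sup>+ z. ennreal (Rb (run mb s z)) \<partial>Zn n)
        + ennreal (\<Delta> * e\<^sup>2 + \<Delta> * e\<^sup>2)"
    unfolding L_def Lg_int using \<Delta>0 by (simp add: ennreal_plus[symmetric] add.assoc del: ennreal_plus)
  moreover have "2 * e * \<Delta> * h = \<Delta> * exp (- K / 4) / 2 + (\<Delta> * e\<^sup>2 + \<Delta> * e\<^sup>2)"
  proof -
    have "h * h = exp (- K / 4)" unfolding h_def by (simp add: exp_add[symmetric])
    then show ?thesis unfolding e_def by (simp add: power2_eq_square field_simps)
  qed
  ultimately have "ennreal (\<Delta> * exp (- K / 4) / 2) + ennreal (\<Delta> * e\<^sup>2 + \<Delta> * e\<^sup>2) \<le>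
      (\<integral>\<^sup>+ z. ennreal (Ra (run ma s z)) \<partial>Zn n) + (\<integral>\<^sup>+ z. ennreal (Rb (run mb s z)) \<partial>Zn n) + ennreal (\<Delta> * e\<^sup>2 + \<Delta> * e\<^sup>2)"
    using \<Delta>0 by (simp add: ennreal_plus[symmetric] del: ennreal_plus)
  then have "ennreal (\<Delta> * e\<^sup>2 + \<Delta> * e\<^sup>2) + ennreal (\<Delta> * exp (- K / 4) / 2) \<le>
      ennreal (\<Delta> * e\<^sup>2 + \<Delta> * e\<^sup>2) + ((\<integral>\<^sup>+ z. ennreal (Ra (run ma s z)) \<partial>Zn n) + (\<integral>\<^sup>+ z. ennreal (Rb (run mb s z)) \<partial>Zn n))"
    by (simp only: add.commute)
  then have "ennreal (\<Delta> * e\<^sup>2 + \<Delta> * e\<^sup>2) = \<infinity> \<or> ennreal (\<Delta> * exp (- K / 4) / 2) \<le>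
      (\<integral>\<^sup>+ z. ennreal (Ra (run ma s z)) \<partial>Zn n) + (\<integral>\<^sup>+ z. ennreal (Rb (run mb s z)) \<partial>Zn n)"
    unfolding ennreal_add_left_cancel_le .
  moreover have "ennreal (\<Delta> * e\<^sup>2 + \<Delta> * e\<^sup>2) \<noteq> \<infinity>" by simp
  ultimately show ?thesis by blast
qed

end

lemma card_filter_Suc:
  "card {i. i < Suc nn \<and> Q i} = card {i. i < nn \<and> Q i} + (if Q nn then 1 else 0)"
proof -
  have "{i. i < Suc nn \<and> Q i} = {i. i < nn \<and> Q i} \<union> (if Q nn then {nn} else {})"
    by (auto simp: less_Suc_eq)
  then show ?thesis by (simp add: card_Un_disjoint)
qed

lemma card_first:
  fixes nn :: nat
  shows
  "card {i. i < nn \<and> P i \<and> card {j. j < i \<and> P j} < T} = min (card {i. i < nn \<and> P i}) T"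
proof (induction nn)
  case 0 then show ?case by simp
next
  case (Suc nn)
  show ?case
    unfolding card_filter_Suc[of nn "\<lambda>i. P i \<and> card {j. j < i \<and> P j} < T"] card_filter_Suc[of nn P] Suc
    by auto
qed

lemma card_filter_compl: "card {i. i < nn \<and> \<not> P i} + card {i. i < nn \<and> P i} = nn"
proof -
  have "{i. i < nn \<and> \<not> P i} \<union> {i. i < nn \<and> P i} = {..<nn}" by auto
  moreover have "card ({i. i < nn \<and> \<not> P i} \<union> {i. i < nn \<and> P i}) = card {i. i < nn \<and> \<not> P i} + card {i. i < nn \<and> P i}"
    by (rule card_Un_disjoint) auto
  ultimately show ?thesis by simp
qed

lemma fiber_bound:
  assumes adm: "T \<le> card {i. i < T + C \<and> P i}"
  shows "card {i. i < T + C \<and> card {j. j < i \<and> P j} = v} \<le> C + 1"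
proof -
  define F where "F = {i. i < T + C \<and> card {j. j < i \<and> P j} = v}"
  have fin: "finite F" unfolding F_def by simp
  have "card (F \<inter> {i. P i}) \<le> 1"
  proof (rule ccontr)
    assume "\<not> card (F \<inter> {i. P i}) \<le> 1"
    then obtain i1 i2 where i: "i1 \<in> F \<inter> {i. P i}" "i2 \<in> F \<inter> {i. P i}" "i1 \<noteq> i2"
      using fin by (metis card_le_Suc0_iff_eq finite_Int One_nat_def)
    have lt: "card {j. j < a \<and> P j} < card {j. j < b \<and> P j}" if "a < b" "P a" for a b
    proof -
      have "insert a {j. j < a \<and> P j} \<subseteq> {j. j < b \<and> P j}" using that by auto
      then have "card (insert a {j. j < a \<and> P j}) \<le> card {j. j < b \<and> P j}" by (intro card_mono) auto
      then show ?thesis by simp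
    qed
    show False
    proof (cases "i1 < i2")
      case True then show ?thesis using lt[of i1 i2] i unfolding F_def by auto
    next
      case False then have "i2 < i1" using i by simp
      then show ?thesis using lt[of i2 i1] i unfolding F_def by auto
    qed
  qed
  moreover have "card (F - {i. P i}) \<le> C"
  proof -
    have "F - {i. P i} \<subseteq> {i. i < T + C \<and> \<not> P i}" unfolding F_def by auto
    then have "card (F - {i. P i}) \<le> card {i. i < T + C \<and> \<not> P i}" by (intro card_mono) auto
    also have "\<dots> \<le> C" using card_filter_compl[of "T + C" P] adm by linarith
    finally show ?thesis .
  qed
  moreover have "card F \<le> card (F \<inter> {i. P i}) + card (F - {i. P i})"
  proof -
    have "F = (F \<inter> {i. P i}) \<union> (F - {i. P i})" by auto
    then have "card F = card ((F \<inter> {i. P i}) \<union> (F - {i. P i}))" by simp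
    also have "\<dots> \<le> card (F \<inter> {i. P i}) + card (F - {i. P i})" by (rule card_Un_le)
    finally show ?thesis .
  qed
  ultimately show ?thesis unfolding F_def by linarith
qed

lemma sum_bound:
  fixes u :: "nat \<Rightarrow> real"
  assumes adm: "T \<le> card {i. i < T + C \<and> P i}" and u0: "\<And>k. u k \<ge> 0" and su: "summable u"
  shows "(\<Sum>i<T + C. u (T - Suc (card {j. j < i \<and> P j}))) \<le> (real C + 1) * (suminf u + real C * u 0)"
proof -
  define cnt where "cnt i = card {j. j < i \<and> P j}" for i
  define g where "g v = u (T - Suc v)" for v
  have cnt_lt: "cnt i < T + C" if "i < T + C" for i
  proof -
    have "cnt i \<le> card {..<i}" unfolding cnt_def by (intro card_mono) auto
    then show ?thesis using that by simp
  qed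
  have "(\<Sum>i<T + C. g (cnt i)) = (\<Sum>v\<in>cnt ` {..<T + C}. \<Sum>i\<in>{x\<in>{..<T + C}. cnt x = v}. g (cnt i))"
    by (rule sum.image_gen) simp
  also have "\<dots> = (\<Sum>v\<in>cnt ` {..<T + C}. real (card {x\<in>{..<T + C}. cnt x = v}) * g v)"
    by (intro sum.cong refl) simp
  also have "\<dots> \<le> (\<Sum>v\<in>cnt ` {..<T + C}. (real C + 1) * g v)"
  proof (intro sum_mono mult_right_mono)
    fix v
    have "{x\<in>{..<T + C}. cnt x = v} = {i. i < T + C \<and> card {j. j < i \<and> P j} = v}"
      unfolding cnt_def by auto
    then show "real (card {x\<in>{..<T + C}. cnt x = v}) \<le> real C + 1"
      using fiber_bound[OF adm, of v] by simp
    show "0 \<le> g v" unfolding g_def by (rule u0)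
  qed
  also have "\<dots> \<le> (\<Sum>v<T + C. (real C + 1) * g v)"
    by (rule sum_mono2) (auto intro: cnt_lt simp: g_def u0)
  also have "\<dots> = (real C + 1) * (\<Sum>v<T + C. g v)" by (simp add: sum_distrib_left)
  also have "(\<Sum>v<T + C. g v) = (\<Sum>v<T. g v) + (\<Sum>v\<in>{T..<T + C}. g v)"
    by (simp add: sum.atLeastLessThan_concat[symmetric] lessThan_atLeast0 del: sum.op_ivl_Suc)
  also have "(\<Sum>v<T. g v) = (\<Sum>v<T. u v)"
    unfolding g_def by (rule sum.nat_diff_reindex)
  also have "(\<Sum>v\<in>{T..<T + C}. g v) = real C * u 0"
    unfolding g_def by simp
  also have "(\<Sum>v<T. u v) \<le> suminf u"
    using su u0 by (intro sum_le_suminf) auto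
  finally show ?thesis unfolding g_def cnt_def by (simp add: mult_left_mono)
qed

lemma bump_eq:
  assumes "Mk > 0"
  shows "kfun (se_kernel Mk l) [(B / Mk, a)] x = B * Mk * exp (- (norm (x - a))\<^sup>2 / (2 * l\<^sup>2))"
  using assms by (simp add: kfun_def se_kernel_def power2_eq_square)

lemma bump_rkhs:
  fixes a :: "'a::real_normed_vector"
  assumes "Mk > 0" "B > 0" "a \<in> D"
  shows "rkhs_ball (se_kernel Mk l) D B (kfun (se_kernel Mk l) [(B / Mk, a)])"
  unfolding rkhs_ball_def
proof (intro exI[of _ "\<lambda>_. [(B / Mk, a)]"] conjI allI impI ballI)
  show "snd ` set [(B / Mk, a)] \<subseteq> D" using assms by simp
  fix \<epsilon> :: real assume "\<epsilon> > 0"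
  then show "\<exists>N. \<forall>m\<ge>N. \<forall>n\<ge>N. knorm2 (se_kernel Mk l) ([(B / Mk, a)] @ kneg [(B / Mk, a)]) < \<epsilon>"
    by (simp add: knorm2_def kneg_def)
next
  fix x assume "x \<in> D"
  show "(\<lambda>n. kfun (se_kernel Mk l) [(B / Mk, a)] x) \<longlonglongrightarrow> kfun (se_kernel Mk l) [(B / Mk, a)] x"
    by simp
next
  have "knorm2 (se_kernel Mk l) [(B / Mk, a)] = B\<^sup>2"
    using assms by (simp add: knorm2_def se_kernel_def power2_eq_square)
  then have "sqrt (knorm2 (se_kernel Mk l) [(B / Mk, a)]) = B" using assms by simp
  then show "\<exists>L. (\<lambda>n. sqrt (knorm2 (se_kernel Mk l) [(B / Mk, a)])) \<longlonglongrightarrow> L \<and> L \<le> B"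
    by (intro exI[of _ B]) simp
qed

lemma obs_list_rl:
  "obs_list f \<sigma> \<alpha> T ismain pt w z i =
     rl (\<lambda>i ys. f (pt i w ys)) (\<lambda>i ys. \<sigma> * sqrt (1 + real (T - step_of ismain i w ys) powr \<alpha>)) z i"
  by (induction i) (simp_all add: Let_def)

lemma obs_seq_run:
  "obs_seq f \<sigma> \<alpha> T ismain pt w z =
     run (\<lambda>i ys. f (pt i w ys)) (\<lambda>i ys. \<sigma> * sqrt (1 + real (T - step_of ismain i w ys) powr \<alpha>)) z"
  unfolding obs_seq_def[abs_def] run_def obs_list_rl by simp

lemma bump_sup:
  fixes a :: "'a::real_normed_vector"
  assumes "a \<in> D" "\<beta> \<ge> 0"
  shows "(SUP x\<in>D. \<beta> * exp (- (norm (x - a))\<^sup>2 / (2 * l\<^sup>2))) = \<beta>"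
proof (rule cSup_eq_maximum)
  show "\<beta> \<in> (\<lambda>x. \<beta> * exp (- (norm (x - a))\<^sup>2 / (2 * l\<^sup>2))) ` D"
    using assms by (auto intro!: image_eqI[of _ _ a])
  fix y assume "y \<in> (\<lambda>x. \<beta> * exp (- (norm (x - a))\<^sup>2 / (2 * l\<^sup>2))) ` D"
  then obtain x where "y = \<beta> * exp (- (norm (x - a))\<^sup>2 / (2 * l\<^sup>2))" by auto
  moreover have "exp (- (norm (x - a))\<^sup>2 / (2 * l\<^sup>2)) \<le> 1" by (simp add: divide_nonneg_nonneg)
  ultimately show "y \<le> \<beta>" using assms(2) by (simp add: mult_left_le)
qed

lemma bump_le: "\<beta> \<ge> 0 \<Longrightarrow> \<beta> * exp (- (norm (x - a))\<^sup>2 / (2 * l\<^sup>2)) \<le> \<beta>"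
  by (simp add: divide_nonneg_nonneg mult_left_le)

lemma bump_pair:
  fixes a b x :: "'a::real_normed_vector"
  assumes "\<beta> \<ge> 0" "l \<noteq> 0"
  shows "(\<beta> - \<beta> * exp (- (norm (x - a))\<^sup>2 / (2 * l\<^sup>2))) + (\<beta> - \<beta> * exp (- (norm (x - b))\<^sup>2 / (2 * l\<^sup>2)))
     \<ge> \<beta> * (1 - exp (- (norm (a - b))\<^sup>2 / (8 * l\<^sup>2)))"
proof -
  have tri: "norm (a - b) \<le> norm (x - a) + norm (x - b)"
    using norm_triangle_ineq4[of "x - b" "x - a"] by (simp add: norm_minus_commute)
  have key: "\<beta> * exp (- (norm (x - c))\<^sup>2 / (2 * l\<^sup>2)) \<le> \<beta> * exp (- (norm (a - b))\<^sup>2 / (8 * l\<^sup>2))"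
    if "norm (a - b) \<le> 2 * norm (x - c)" for c
  proof -
    have "(norm (a - b))\<^sup>2 \<le> (2 * norm (x - c))\<^sup>2"
      using that by (intro power_mono) auto
    then have "(norm (a - b))\<^sup>2 / (8 * l\<^sup>2) \<le> (2 * norm (x - c))\<^sup>2 / (8 * l\<^sup>2)"
      using assms(2) by (intro divide_right_mono) auto
    also have "(2 * norm (x - c))\<^sup>2 / (8 * l\<^sup>2) = (norm (x - c))\<^sup>2 / (2 * l\<^sup>2)"
      by (simp add: power_mult_distrib)
    finally have "(norm (a - b))\<^sup>2 / (8 * l\<^sup>2) \<le> (norm (x - c))\<^sup>2 / (2 * l\<^sup>2)" .
    then show ?thesis using assms(1) by (intro mult_left_mono) auto
  qed
  show ?thesis
  proof (cases "norm (a - b) \<le> 2 * norm (x - a)")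
    case True
    from key[OF True] bump_le[OF assms(1), of x b l] show ?thesis by (simp add: algebra_simps)
  next
    case False
    then have "norm (a - b) \<le> 2 * norm (x - b)" using tri by linarith
    from key[OF this] bump_le[OF assms(1), of x a l] show ?thesis by (simp add: algebra_simps)
  qed
qed

lemma summable_u:
  assumes "\<alpha> > 1"
  shows "summable (\<lambda>k::nat. 1 / (1 + real k powr \<alpha>))"
proof (rule summable_comparison_test_ev)
  show "summable (\<lambda>k::nat. real k powr (- \<alpha>))"
    using assms by (subst summable_real_powr_iff) simp
  show "\<forall>\<^sub>F k in sequentially. norm (1 / (1 + real k powr \<alpha>)) \<le> real k powr (- \<alpha>)"
    using eventually_gt_at_top[of "0::nat"]
  proof eventually_elim
    case (elim k)
    have "real k powr \<alpha> > 0" using elim by simp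
    then have "1 / (1 + real k powr \<alpha>) \<le> 1 / real k powr \<alpha>" by (intro divide_left_mono) (auto simp: zero_less_mult_iff add_pos_pos)
    then show ?case using elim by (simp add: powr_minus divide_inverse)
  qed
qed

lemma card_sum_nat: fixes i :: nat shows "card {j. j < i \<and> P j} = (\<Sum>j<i. if P j then 1 else 0)"
  by (induction i) (simp_all add: card_filter_Suc)

lemma card_sum_real: fixes i :: nat shows "real (card {j. j < i \<and> P j}) = (\<Sum>j<i. if P j then 1 else 0)"
  unfolding card_sum_nat by (simp add: of_nat_sum if_distrib cong: if_cong)

lemma real_T_step: "real (T - Suc c) = max 0 (real T - 1 - real c)"
  by (cases "Suc c \<le> T") (auto simp: of_nat_diff)

lemma pred_of_bool_meas: "f \<in> measurable M (count_space UNIV) \<Longrightarrow> Measurable.pred M f"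
  using pred_count_space_const1[of f M True] by simp

lemma sets_seq_measure: "sets seq_measure = sets seq_borel"
  unfolding seq_measure_def seq_borel_def by (rule sets_PiM_cong) (simp_all add: sets_N)

lemma space_seq_measure: "space seq_measure = UNIV"
  using sets_eq_imp_space_eq[OF sets_seq_measure] by simp

lemma seq_measure_prob: "prob_space seq_measure"
  unfolding seq_measure_def by (rule prob_space_PiM) (rule N_prob)

lemma Pair_meas: "(\<lambda>ys. (w, ys)) \<in> measurable seq_borel (seq_borel \<Otimes>\<^sub>M seq_borel)"
  by (intro measurable_Pair) auto

locale inst =
  fixes D :: "(real ^ 'd) set" and a b :: "real ^ 'd" and Mk l B \<sigma> \<alpha> :: real and C T :: nat
    and ismain :: "nat \<Rightarrow> (nat \<Rightarrow> real) \<Rightarrow> (nat \<Rightarrow> real) \<Rightarrow> bool"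
    and pt :: "nat \<Rightarrow> (nat \<Rightarrow> real) \<Rightarrow> (nat \<Rightarrow> real) \<Rightarrow> real ^ 'd"
  assumes aD: "a \<in> D" and bD: "b \<in> D" and ab: "a \<noteq> b"
    and Mk: "Mk > 0" and l: "l > 0" and B: "B > 0" and \<sigma>: "\<sigma> > 0" and \<alpha>: "\<alpha> > 1"
    and adm: "admissible_alg D C T ismain pt"
begin

definition "\<beta> = B * Mk"
definition "fa = kfun (se_kernel Mk l) [(B / Mk, a)]"
definition "fb = kfun (se_kernel Mk l) [(B / Mk, b)]"
definition "sT w i ys = \<sigma> * sqrt (1 + real (T - step_of ismain i w ys) powr \<alpha>)"
definition "mA w i ys = fa (pt i w ys)"
definition "mB w i ys = fb (pt i w ys)"
definition "rc w i ys = (\<Sum>j<i. if ismain j w ys then 1 else 0 :: real)"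

lemma \<beta>_pos: "\<beta> > 0" unfolding \<beta>_def using B Mk by simp

lemma fa_eq: "fa x = \<beta> * exp (- (norm (x - a))\<^sup>2 / (2 * l\<^sup>2))"
  unfolding fa_def \<beta>_def using bump_eq[OF Mk] by simp
lemma fb_eq: "fb x = \<beta> * exp (- (norm (x - b))\<^sup>2 / (2 * l\<^sup>2))"
  unfolding fb_def \<beta>_def using bump_eq[OF Mk] by simp

lemma fa_m[measurable]: "fa \<in> borel_measurable borel"
  unfolding fa_eq[abs_def] by measurable
lemma fb_m[measurable]: "fb \<in> borel_measurable borel"
  unfolding fb_eq[abs_def] by measurable

lemma supa: "(SUP x\<in>D. fa x) = \<beta>"
  unfolding fa_eq using bump_sup[OF aD] \<beta>_pos by simp
lemma supb: "(SUP x\<in>D. fb x) = \<beta>"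
  unfolding fb_eq using bump_sup[OF bD] \<beta>_pos by simp

lemma fa_le: "fa x \<le> \<beta>" and fb_le: "fb x \<le> \<beta>" and fa_ge: "fa x \<ge> 0" and fb_ge: "fb x \<ge> 0"
  unfolding fa_eq fb_eq using bump_le[of \<beta>] \<beta>_pos by auto

lemma adm_causal: "(\<And>j. j < i \<Longrightarrow> ys j = ys' j) \<Longrightarrow> ismain i w ys = ismain i w ys' \<and> pt i w ys = pt i w ys'"
  using adm unfolding admissible_alg_def by blast

lemma adm_card: "T \<le> card {i. i < T + C \<and> ismain i w ys}"
  using adm unfolding admissible_alg_def by blast

lemma pt_jm[measurable]: "(\<lambda>p. pt i (fst p) (snd p)) \<in> borel_measurable (seq_borel \<Otimes>\<^sub>M seq_borel)"
proof -
  have "(\<lambda>(w, ys). pt i w ys) \<in> borel_measurable (seq_borel \<Otimes>\<^sub>M seq_borel)"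
    using adm unfolding admissible_alg_def by blast
  then show ?thesis by (simp only: split_beta')
qed

lemma im_jm[measurable]: "Measurable.pred (seq_borel \<Otimes>\<^sub>M seq_borel) (\<lambda>p. ismain i (fst p) (snd p))"
proof -
  have "(\<lambda>(w, ys). ismain i w ys) \<in> measurable (seq_borel \<Otimes>\<^sub>M seq_borel) (count_space UNIV)"
    using adm unfolding admissible_alg_def by blast
  then have "(\<lambda>p. ismain i (fst p) (snd p)) \<in> measurable (seq_borel \<Otimes>\<^sub>M seq_borel) (count_space UNIV)"
    by (simp only: split_beta')
  then show ?thesis by (rule pred_of_bool_meas)
qed

lemma step_real: "real (T - step_of ismain i w ys) = max 0 (real T - 1 - rc w i ys)"
  unfolding step_of_def rc_def real_T_step card_sum_real ..

lemma sT_eq: "sT w i ys = \<sigma> * sqrt (1 + (max 0 (real T - 1 - rc w i ys)) powr \<alpha>)"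
  unfolding sT_def step_real ..

lemma rc_jm[measurable]: "(\<lambda>p. rc (fst p) i (snd p)) \<in> borel_measurable (seq_borel \<Otimes>\<^sub>M seq_borel)"
  unfolding rc_def by measurable

lemma sT_jm: "(\<lambda>(w, y). sT w i y) \<in> borel_measurable (seq_borel \<Otimes>\<^sub>M seq_borel)"
  unfolding sT_eq split_beta' by measurable

lemma mA_jm: "(\<lambda>(w, y). mA w i y) \<in> borel_measurable (seq_borel \<Otimes>\<^sub>M seq_borel)"
  unfolding mA_def split_beta' by measurable
lemma mB_jm: "(\<lambda>(w, y). mB w i y) \<in> borel_measurable (seq_borel \<Otimes>\<^sub>M seq_borel)"
  unfolding mB_def split_beta' by measurable

lemma fix_w: "(\<lambda>(w, y). F w y) \<in> borel_measurable (seq_borel \<Otimes>\<^sub>M seq_borel) \<Longrightarrow> F w \<in> borel_measurable seq_borel"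
  using measurable_comp[OF Pair_meas[of w], of "\<lambda>(w, y). F w y"] by (simp add: comp_def)

end

context inst begin

lemma cnt_eq:
  assumes h: "\<And>j. j < i \<Longrightarrow> ys j = ys' j"
  shows "{j. j < i \<and> ismain j w ys} = {j. j < i \<and> ismain j w ys'}"
proof -
  have "ismain j w ys = ismain j w ys'" if "j < i" for j
  proof -
    have "\<And>k. k < j \<Longrightarrow> ys k = ys' k" using h that by auto
    then show ?thesis using adm_causal[where i=j and ys=ys and ys'=ys' and w=w] by blast
  qed
  then show ?thesis by auto
qed

lemma pt_eq: "(\<And>j. j < i \<Longrightarrow> ys j = ys' j) \<Longrightarrow> pt i w ys = pt i w ys'"
  using adm_causal[where i=i and ys=ys and ys'=ys' and w=w] by blast

lemma cA: "causal (mA w)"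
  unfolding causal_def mA_def using pt_eq by metis
lemma cB: "causal (mB w)"
  unfolding causal_def mB_def using pt_eq by metis
lemma cS: "causal (sT w)"
  unfolding causal_def sT_def step_of_def
proof (intro allI impI)
  fix i :: nat and y y' :: "nat \<Rightarrow> real" assume "\<forall>j<i. y j = y' j"
  then have "{j. j < i \<and> ismain j w y} = {j. j < i \<and> ismain j w y'}" by (intro cnt_eq) auto
  then show "\<sigma> * sqrt (1 + real (T - Suc (card {j. j < i \<and> ismain j w y})) powr \<alpha>) =
       \<sigma> * sqrt (1 + real (T - Suc (card {j. j < i \<and> ismain j w y'})) powr \<alpha>)" by simp
qed

lemma spos: "sT w i y > 0"
  unfolding sT_def using \<sigma> by (simp add: add_pos_nonneg)

lemma mA_m: "mA w i \<in> borel_measurable seq_borel"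
  using fix_w[OF mA_jm] .
lemma mB_m: "mB w i \<in> borel_measurable seq_borel"
  using fix_w[OF mB_jm] .
lemma sT_m: "sT w i \<in> borel_measurable seq_borel"
  using fix_w[OF sT_jm] .

lemma gs: "gsetup (mA w) (mB w) (sT w)"
  by unfold_locales (auto intro: cA cB cS spos mA_m mB_m sT_m)

definition "cond w ys i \<longleftrightarrow> ismain i w ys \<and> rc w i ys < real T"

lemma card_lt_iff: "card {j. j < i \<and> ismain j w ys} < T \<longleftrightarrow> rc w i ys < real T"
  unfolding rc_def card_sum_real[symmetric] by simp

lemma regA: "regret D fa T C ismain pt w ys = (\<Sum>i<T + C. if cond w ys i then \<beta> - fa (pt i w ys) else 0)"
  unfolding regret_def supa cond_def card_lt_iff ..
lemma regB: "regret D fb T C ismain pt w ys = (\<Sum>i<T + C. if cond w ys i then \<beta> - fb (pt i w ys) else 0)"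
  unfolding regret_def supb cond_def card_lt_iff ..

lemma cond_jm[measurable]: "Measurable.pred (seq_borel \<Otimes>\<^sub>M seq_borel) (\<lambda>p. cond (fst p) (snd p) i)"
  unfolding cond_def by measurable

lemma regA_jm: "(\<lambda>p. regret D fa T C ismain pt (fst p) (snd p)) \<in> borel_measurable (seq_borel \<Otimes>\<^sub>M seq_borel)"
  unfolding regA by measurable
lemma regB_jm: "(\<lambda>p. regret D fb T C ismain pt (fst p) (snd p)) \<in> borel_measurable (seq_borel \<Otimes>\<^sub>M seq_borel)"
  unfolding regB by measurable

lemma regA_nn: "regret D fa T C ismain pt w ys \<ge> 0"
  unfolding regA using fa_le by (intro sum_nonneg) auto
lemma regB_nn: "regret D fb T C ismain pt w ys \<ge> 0"
  unfolding regB using fb_le by (intro sum_nonneg) auto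

lemma regA_le: "regret D fa T C ismain pt w ys \<le> \<beta> * real (T + C)"
proof -
  have "regret D fa T C ismain pt w ys \<le> (\<Sum>i<T + C. \<beta>)"
    unfolding regA using fa_ge \<beta>_pos by (intro sum_mono) auto
  then show ?thesis by (simp add: mult.commute)
qed
lemma regB_le: "regret D fb T C ismain pt w ys \<le> \<beta> * real (T + C)"
proof -
  have "regret D fb T C ismain pt w ys \<le> (\<Sum>i<T + C. \<beta>)"
    unfolding regB using fb_ge \<beta>_pos by (intro sum_mono) auto
  then show ?thesis by (simp add: mult.commute)
qed

lemma cond_dep:
  assumes h: "\<And>j. j < i \<Longrightarrow> ys j = ys' j"
  shows "cond w ys i = cond w ys' i"
proof -
  have "ismain i w ys = ismain i w ys'" using adm_causal[where i=i and ys=ys and ys'=ys' and w=w, OF h] by blast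
  moreover have "{j. j < i \<and> ismain j w ys} = {j. j < i \<and> ismain j w ys'}" by (rule cnt_eq[OF h])
  ultimately show ?thesis unfolding cond_def card_lt_iff[symmetric] by simp
qed

lemma regA_dep: "(\<And>j. j < T + C \<Longrightarrow> ys j = ys' j) \<Longrightarrow> regret D fa T C ismain pt w ys = regret D fa T C ismain pt w ys'"
  unfolding regA
proof (intro sum.cong refl)
  fix i assume "i \<in> {..<T + C}" and h: "\<And>j. j < T + C \<Longrightarrow> ys j = ys' j"
  then have h': "\<And>j. j < i \<Longrightarrow> ys j = ys' j" by auto
  show "(if cond w ys i then \<beta> - fa (pt i w ys) else 0) = (if cond w ys' i then \<beta> - fa (pt i w ys') else 0)"
    using cond_dep[OF h'] adm_causal[where i=i and ys=ys and ys'=ys' and w=w, OF h'] by simp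
qed
lemma regB_dep: "(\<And>j. j < T + C \<Longrightarrow> ys j = ys' j) \<Longrightarrow> regret D fb T C ismain pt w ys = regret D fb T C ismain pt w ys'"
  unfolding regB
proof (intro sum.cong refl)
  fix i assume "i \<in> {..<T + C}" and h: "\<And>j. j < T + C \<Longrightarrow> ys j = ys' j"
  then have h': "\<And>j. j < i \<Longrightarrow> ys j = ys' j" by auto
  show "(if cond w ys i then \<beta> - fb (pt i w ys) else 0) = (if cond w ys' i then \<beta> - fb (pt i w ys') else 0)"
    using cond_dep[OF h'] adm_causal[where i=i and ys=ys and ys'=ys' and w=w, OF h'] by simp
qed

definition "\<delta> = \<beta> * (1 - exp (- (norm (a - b))\<^sup>2 / (8 * l\<^sup>2)))"

lemma \<delta>_pos: "\<delta> > 0"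
proof -
  have "norm (a - b) > 0" using ab by simp
  then have "(norm (a - b))\<^sup>2 / (8 * l\<^sup>2) > 0" using l by simp
  then have "exp (- (norm (a - b))\<^sup>2 / (8 * l\<^sup>2)) < 1" by simp
  then show ?thesis unfolding \<delta>_def using \<beta>_pos by simp
qed

lemma reg_sum: "regret D fa T C ismain pt w ys + regret D fb T C ismain pt w ys \<ge> \<delta> * real T"
proof -
  have "(\<Sum>i<T + C. if cond w ys i then \<delta> else 0) \<le>
      (\<Sum>i<T + C. (if cond w ys i then \<beta> - fa (pt i w ys) else 0) + (if cond w ys i then \<beta> - fb (pt i w ys) else 0))"
  proof (intro sum_mono)
    fix i
    show "(if cond w ys i then \<delta> else 0) \<le> (if cond w ys i then \<beta> - fa (pt i w ys) else 0) + (if cond w ys i then \<beta> - fb (pt i w ys) else 0)"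
      using bump_pair[where \<beta>=\<beta> and l=l and x="pt i w ys" and a=a and b=b] \<beta>_pos l unfolding \<delta>_def fa_eq fb_eq by auto
  qed
  also have "\<dots> = regret D fa T C ismain pt w ys + regret D fb T C ismain pt w ys"
    unfolding regA regB by (simp add: sum.distrib)
  finally have 1: "(\<Sum>i<T + C. if cond w ys i then \<delta> else 0) \<le> \<dots>" .
  have "(\<Sum>i<T + C. if cond w ys i then \<delta> else 0) = \<delta> * real (card {i. i < T + C \<and> cond w ys i})"
    unfolding card_sum_real by (simp add: sum_distrib_left if_distrib cong: if_cong)
  also have "card {i. i < T + C \<and> cond w ys i} = min (card {i. i < T + C \<and> ismain i w ys}) T"
  proof -
    have "{i. i < T + C \<and> cond w ys i} = {i. i < T + C \<and> ismain i w ys \<and> card {j. j < i \<and> ismain j w ys} < T}"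
      unfolding cond_def card_lt_iff by auto
    then show ?thesis using card_first by simp
  qed
  also have "\<dots> = T" using adm_card[of w ys] by simp
  finally show ?thesis using 1 by simp
qed

end

interpretation PP: product_prob_space "\<lambda>_::nat. N" UNIV
  by unfold_locales (simp_all add: prob_space.emeasure_space_1[OF N_prob])

lemma restrict_int:
  fixes G :: "(nat \<Rightarrow> real) \<Rightarrow> ennreal"
  assumes G: "G \<in> borel_measurable (Zn n)"
    and Gr: "\<And>z. G (restrict z {..<n}) = G z"
  shows "(\<integral>\<^sup>+ z. G z \<partial>seq_measure) = (\<integral>\<^sup>+ z. G z \<partial>Zn n)"
proof -
  have "(\<integral>\<^sup>+ z. G z \<partial>Zn n) = (\<integral>\<^sup>+ z. G z \<partial>distr seq_measure (Zn n) (\<lambda>x. restrict x {..<n}))"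
    unfolding seq_measure_def using PP.distr_PiM_restrict_finite[of "{..<n}"] by simp
  also have "\<dots> = (\<integral>\<^sup>+ z. G (restrict z {..<n}) \<partial>seq_measure)"
    unfolding seq_measure_def by (rule nn_integral_distr) (auto intro: measurable_restrict_subset G)
  finally show ?thesis unfolding Gr ..
qed

context inst begin

definition "U = suminf (\<lambda>k::nat. 1 / (1 + real k powr \<alpha>))"
definition "Kc = (\<beta> / \<sigma>)\<^sup>2 * ((real C + 1) * (U + real C))"

lemma Dg_term:
  "(Dg (mA w) (mB w) (sT w) i z)\<^sup>2 \<le> (\<beta> / \<sigma>)\<^sup>2 *
     (1 / (1 + real (T - Suc (card {j. j < i \<and> ismain j w (run (mB w) (sT w) z)})) powr \<alpha>))"
proof -
  define y where "y = run (mB w) (sT w) z"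
  define x where "x = pt i w y"
  define p where "p = real (T - Suc (card {j. j < i \<and> ismain j w y})) powr \<alpha>"
  have p0: "p \<ge> 0" unfolding p_def by simp
  have sT_y: "sT w i y = \<sigma> * sqrt (1 + p)" unfolding sT_def p_def step_of_def ..
  have "Dg (mA w) (mB w) (sT w) i z = (fa x - fb x) / (\<sigma> * sqrt (1 + p))"
    unfolding Dg_def y_def[symmetric] sT_y mA_def mB_def x_def ..
  then have "(Dg (mA w) (mB w) (sT w) i z)\<^sup>2 = (fa x - fb x)\<^sup>2 / (\<sigma>\<^sup>2 * (1 + p))"
    using p0 by (simp add: power_divide power_mult_distrib)
  also have "\<dots> \<le> \<beta>\<^sup>2 / (\<sigma>\<^sup>2 * (1 + p))"
  proof (rule divide_right_mono)
    have "\<bar>fa x - fb x\<bar> \<le> \<beta>" using fa_le fb_le fa_ge fb_ge by (simp add: abs_le_iff) (meson add_increasing2 diff_le_eq order.trans)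
    then have "\<bar>fa x - fb x\<bar>\<^sup>2 \<le> \<beta>\<^sup>2" by (intro power_mono) auto
    then show "(fa x - fb x)\<^sup>2 \<le> \<beta>\<^sup>2" by simp
    show "0 \<le> \<sigma>\<^sup>2 * (1 + p)" using p0 by simp
  qed
  also have "\<dots> = (\<beta> / \<sigma>)\<^sup>2 * (1 / (1 + p))" by (simp add: power_divide)
  finally show ?thesis unfolding p_def y_def .
qed

lemma Dg_bound: "(\<Sum>i<T + C. (Dg (mA w) (mB w) (sT w) i z)\<^sup>2) \<le> Kc"
proof -
  define y where "y = run (mB w) (sT w) z"
  define u where "u k = 1 / (1 + real k powr \<alpha>)" for k :: nat
  have "(\<Sum>i<T + C. (Dg (mA w) (mB w) (sT w) i z)\<^sup>2) \<le>
        (\<Sum>i<T + C. (\<beta> / \<sigma>)\<^sup>2 * u (T - Suc (card {j. j < i \<and> ismain j w y})))"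
    unfolding u_def y_def by (intro sum_mono Dg_term)
  also have "\<dots> = (\<beta> / \<sigma>)\<^sup>2 * (\<Sum>i<T + C. u (T - Suc (card {j. j < i \<and> ismain j w y})))"
    by (simp add: sum_distrib_left)
  also have "\<dots> \<le> (\<beta> / \<sigma>)\<^sup>2 * ((real C + 1) * (suminf u + real C * u 0))"
    by (intro mult_left_mono sum_bound adm_card) (auto simp: u_def summable_u[OF \<alpha>] add_pos_nonneg)
  also have "\<dots> = Kc" unfolding Kc_def U_def u_def by simp
  finally show ?thesis unfolding y_def .
qed


lemma oA: "obs_seq fa \<sigma> \<alpha> T ismain pt w = run (mA w) (sT w)"
  by (rule ext) (simp add: obs_seq_run mA_def[abs_def] sT_def[abs_def])
lemma oB: "obs_seq fb \<sigma> \<alpha> T ismain pt w = run (mB w) (sT w)"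
  by (rule ext) (simp add: obs_seq_run mB_def[abs_def] sT_def[abs_def])

lemma run_restrict: "j < n \<Longrightarrow> run m s (restrict z {..<n}) j = run m s z j"
  by (rule run_dep) auto

lemma per_w:
  "ennreal (\<delta> * real T * exp (- Kc / 4) / 2) \<le>
     (\<integral>\<^sup>+ z. ennreal (regret D fa T C ismain pt w (obs_seq fa \<sigma> \<alpha> T ismain pt w z)) \<partial>seq_measure) +
     (\<integral>\<^sup>+ z. ennreal (regret D fb T C ismain pt w (obs_seq fb \<sigma> \<alpha> T ismain pt w z)) \<partial>seq_measure)"
proof -
  interpret g: gsetup "mA w" "mB w" "sT w" by (rule gs)
  have RAm: "regret D fa T C ismain pt w \<in> borel_measurable seq_borel"
    using fix_w[of "\<lambda>w y. regret D fa T C ismain pt w y"] regA_jm by (simp add: split_beta')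
  have RBm: "regret D fb T C ismain pt w \<in> borel_measurable seq_borel"
    using fix_w[of "\<lambda>w y. regret D fb T C ismain pt w y"] regB_jm by (simp add: split_beta')
  have iA: "(\<integral>\<^sup>+ z. ennreal (regret D fa T C ismain pt w (run (mA w) (sT w) z)) \<partial>seq_measure)
      = (\<integral>\<^sup>+ z. ennreal (regret D fa T C ismain pt w (run (mA w) (sT w) z)) \<partial>Zn (T + C))"
  proof (rule restrict_int)
    show "(\<lambda>z. ennreal (regret D fa T C ismain pt w (run (mA w) (sT w) z))) \<in> borel_measurable (Zn (T + C))"
      using measurable_compose[OF g.runa RAm] by simp
    fix z
    show "ennreal (regret D fa T C ismain pt w (run (mA w) (sT w) (restrict z {..<T + C}))) =
          ennreal (regret D fa T C ismain pt w (run (mA w) (sT w) z))"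
      using regA_dep[of "run (mA w) (sT w) (restrict z {..<T + C})" "run (mA w) (sT w) z" w] run_restrict by simp
  qed
  have iB: "(\<integral>\<^sup>+ z. ennreal (regret D fb T C ismain pt w (run (mB w) (sT w) z)) \<partial>seq_measure)
      = (\<integral>\<^sup>+ z. ennreal (regret D fb T C ismain pt w (run (mB w) (sT w) z)) \<partial>Zn (T + C))"
  proof (rule restrict_int)
    show "(\<lambda>z. ennreal (regret D fb T C ismain pt w (run (mB w) (sT w) z))) \<in> borel_measurable (Zn (T + C))"
      using measurable_compose[OF g.runb RBm] by simp
    fix z
    show "ennreal (regret D fb T C ismain pt w (run (mB w) (sT w) (restrict z {..<T + C}))) =
          ennreal (regret D fb T C ismain pt w (run (mB w) (sT w) z))"
      using regB_dep[of "run (mB w) (sT w) (restrict z {..<T + C})" "run (mB w) (sT w) z" w] run_restrict by simp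
  qed
  have "ennreal (\<delta> * real T * exp (- Kc / 4) / 2) \<le>
     (\<integral>\<^sup>+ z. ennreal (regret D fa T C ismain pt w (run (mA w) (sT w) z)) \<partial>Zn (T + C)) +
     (\<integral>\<^sup>+ z. ennreal (regret D fb T C ismain pt w (run (mB w) (sT w) z)) \<partial>Zn (T + C))"
  proof (rule g.key)
    show "regret D fa T C ismain pt w \<in> borel_measurable seq_borel" by (rule RAm)
    show "regret D fb T C ismain pt w \<in> borel_measurable seq_borel" by (rule RBm)
    show "\<And>y. 0 \<le> regret D fa T C ismain pt w y" by (rule regA_nn)
    show "\<And>y. 0 \<le> regret D fb T C ismain pt w y" by (rule regB_nn)
    show "\<And>y. \<delta> * real T \<le> regret D fa T C ismain pt w y + regret D fb T C ismain pt w y" by (rule reg_sum)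
    show "0 \<le> \<delta> * real T" using \<delta>_pos by simp
    show "\<And>y y'. (\<And>j. j < T + C \<Longrightarrow> y j = y' j) \<Longrightarrow> regret D fa T C ismain pt w y = regret D fa T C ismain pt w y'"
      by (rule regA_dep)
    show "\<And>z. (\<Sum>i<T + C. (Dg (mA w) (mB w) (sT w) i z)\<^sup>2) \<le> Kc" by (rule Dg_bound)
  qed
  then show ?thesis unfolding oA oB iA iB .
qed

end

lemma S_sf: "sigma_finite_measure seq_measure"
  by (rule prob_space_imp_sigma_finite[OF seq_measure_prob])

lemma SS_prob: "prob_space (seq_measure \<Otimes>\<^sub>M seq_measure)"
  by (intro prob_space_pair seq_measure_prob)

lemma sets_SS: "sets (seq_measure \<Otimes>\<^sub>M seq_measure) = sets (seq_borel \<Otimes>\<^sub>M seq_measure)"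
  by (rule sets_pair_measure_cong[OF sets_seq_measure refl])

lemma coord_S: "(\<lambda>z. z i) \<in> borel_measurable seq_measure"
  unfolding seq_measure_def by (rule measurable_coord_PiM)

context inst begin

lemma jointA: "(\<lambda>p. regret D fa T C ismain pt (fst p) (obs_seq fa \<sigma> \<alpha> T ismain pt (fst p) (snd p)))
    \<in> borel_measurable (seq_measure \<Otimes>\<^sub>M seq_measure)"
proof -
  have r: "(\<lambda>(w, z). run (mA w) (sT w) z) \<in> measurable (seq_borel \<Otimes>\<^sub>M seq_measure) seq_borel"
    by (rule measurable_run) (auto intro: mA_jm sT_jm coord_S)
  then have r': "(\<lambda>p. run (mA (fst p)) (sT (fst p)) (snd p)) \<in> measurable (seq_measure \<Otimes>\<^sub>M seq_measure) seq_borel"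
    unfolding measurable_cong_sets[OF sets_SS refl] by (simp add: split_beta')
  have f: "fst \<in> measurable (seq_measure \<Otimes>\<^sub>M seq_measure) seq_borel"
    using measurable_fst[of seq_measure seq_measure] unfolding measurable_cong_sets[OF refl sets_seq_measure] .
  have "(\<lambda>p. (fst p, run (mA (fst p)) (sT (fst p)) (snd p))) \<in> measurable (seq_measure \<Otimes>\<^sub>M seq_measure) (seq_borel \<Otimes>\<^sub>M seq_borel)"
    using f r' by (rule measurable_Pair)
  from measurable_comp[OF this regA_jm] show ?thesis by (simp add: comp_def oA)
qed

lemma jointB: "(\<lambda>p. regret D fb T C ismain pt (fst p) (obs_seq fb \<sigma> \<alpha> T ismain pt (fst p) (snd p)))
    \<in> borel_measurable (seq_measure \<Otimes>\<^sub>M seq_measure)"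
proof -
  have r: "(\<lambda>(w, z). run (mB w) (sT w) z) \<in> measurable (seq_borel \<Otimes>\<^sub>M seq_measure) seq_borel"
    by (rule measurable_run) (auto intro: mB_jm sT_jm coord_S)
  then have r': "(\<lambda>p. run (mB (fst p)) (sT (fst p)) (snd p)) \<in> measurable (seq_measure \<Otimes>\<^sub>M seq_measure) seq_borel"
    unfolding measurable_cong_sets[OF sets_SS refl] by (simp add: split_beta')
  have f: "fst \<in> measurable (seq_measure \<Otimes>\<^sub>M seq_measure) seq_borel"
    using measurable_fst[of seq_measure seq_measure] unfolding measurable_cong_sets[OF refl sets_seq_measure] .
  have "(\<lambda>p. (fst p, run (mB (fst p)) (sT (fst p)) (snd p))) \<in> measurable (seq_measure \<Otimes>\<^sub>M seq_measure) (seq_borel \<Otimes>\<^sub>M seq_borel)"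
    using f r' by (rule measurable_Pair)
  from measurable_comp[OF this regB_jm] show ?thesis by (simp add: comp_def oB)
qed

abbreviation "FA p \<equiv> regret D fa T C ismain pt (fst p) (obs_seq fa \<sigma> \<alpha> T ismain pt (fst p) (snd p))"
abbreviation "FB p \<equiv> regret D fb T C ismain pt (fst p) (obs_seq fb \<sigma> \<alpha> T ismain pt (fst p) (snd p))"

lemma both:
  "ennreal (\<delta> * real T * exp (- Kc / 4) / 2) \<le>
    (\<integral>\<^sup>+ p. ennreal (FA p) \<partial>(seq_measure \<Otimes>\<^sub>M seq_measure)) + (\<integral>\<^sup>+ p. ennreal (FB p) \<partial>(seq_measure \<Otimes>\<^sub>M seq_measure))"
proof -
  have mA'[measurable]: "(\<lambda>p. ennreal (FA p)) \<in> borel_measurable (seq_measure \<Otimes>\<^sub>M seq_measure)"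
    using jointA by measurable
  have mB'[measurable]: "(\<lambda>p. ennreal (FB p)) \<in> borel_measurable (seq_measure \<Otimes>\<^sub>M seq_measure)"
    using jointB by measurable
  have "(\<integral>\<^sup>+ p. ennreal (FA p) \<partial>(seq_measure \<Otimes>\<^sub>M seq_measure)) + (\<integral>\<^sup>+ p. ennreal (FB p) \<partial>(seq_measure \<Otimes>\<^sub>M seq_measure))
      = (\<integral>\<^sup>+ p. ennreal (FA p) + ennreal (FB p) \<partial>(seq_measure \<Otimes>\<^sub>M seq_measure))"
    by (rule nn_integral_add[symmetric]) auto
  also have "\<dots> = (\<integral>\<^sup>+ w. \<integral>\<^sup>+ z. ennreal (FA (w, z)) + ennreal (FB (w, z)) \<partial>seq_measure \<partial>seq_measure)"
    by (rule sigma_finite_measure.nn_integral_fst[OF S_sf, symmetric]) measurable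
  also have "\<dots> \<ge> (\<integral>\<^sup>+ w. ennreal (\<delta> * real T * exp (- Kc / 4) / 2) \<partial>seq_measure)"
  proof (rule nn_integral_mono)
    fix w assume w: "w \<in> space seq_measure"
    have "(\<integral>\<^sup>+ z. ennreal (FA (w, z)) + ennreal (FB (w, z)) \<partial>seq_measure)
        = (\<integral>\<^sup>+ z. ennreal (FA (w, z)) \<partial>seq_measure) + (\<integral>\<^sup>+ z. ennreal (FB (w, z)) \<partial>seq_measure)"
    proof (rule nn_integral_add)
      show "(\<lambda>z. ennreal (FA (w, z))) \<in> borel_measurable seq_measure"
        using measurable_Pair2[OF mA' w] by simp
      show "(\<lambda>z. ennreal (FB (w, z))) \<in> borel_measurable seq_measure"
        using measurable_Pair2[OF mB' w] by simp
    qed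
    then show "ennreal (\<delta> * real T * exp (- Kc / 4) / 2) \<le> (\<integral>\<^sup>+ z. ennreal (FA (w, z)) + ennreal (FB (w, z)) \<partial>seq_measure)"
      using per_w[of w] by simp
  qed
  also have "(\<integral>\<^sup>+ w. ennreal (\<delta> * real T * exp (- Kc / 4) / 2) \<partial>seq_measure) = ennreal (\<delta> * real T * exp (- Kc / 4) / 2)"
    using prob_space.emeasure_space_1[OF seq_measure_prob] by simp
  finally show ?thesis .
qed

lemma finA: "(\<integral>\<^sup>+ p. ennreal (FA p) \<partial>(seq_measure \<Otimes>\<^sub>M seq_measure)) \<le> ennreal (\<beta> * real (T + C))"
proof -
  have "(\<integral>\<^sup>+ p. ennreal (FA p) \<partial>(seq_measure \<Otimes>\<^sub>M seq_measure)) \<le> (\<integral>\<^sup>+ p. ennreal (\<beta> * real (T + C)) \<partial>(seq_measure \<Otimes>\<^sub>M seq_measure))"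
    by (intro nn_integral_mono ennreal_leI regA_le)
  also have "\<dots> = ennreal (\<beta> * real (T + C))"
    using prob_space.emeasure_space_1[OF SS_prob] by simp
  finally show ?thesis .
qed
lemma finB: "(\<integral>\<^sup>+ p. ennreal (FB p) \<partial>(seq_measure \<Otimes>\<^sub>M seq_measure)) \<le> ennreal (\<beta> * real (T + C))"
proof -
  have "(\<integral>\<^sup>+ p. ennreal (FB p) \<partial>(seq_measure \<Otimes>\<^sub>M seq_measure)) \<le> (\<integral>\<^sup>+ p. ennreal (\<beta> * real (T + C)) \<partial>(seq_measure \<Otimes>\<^sub>M seq_measure))"
    by (intro nn_integral_mono ennreal_leI regB_le)
  also have "\<dots> = ennreal (\<beta> * real (T + C))"
    using prob_space.emeasure_space_1[OF SS_prob] by simp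
  finally show ?thesis .
qed

lemma erA: "expected_regret D fa \<sigma> \<alpha> T C ismain pt = enn2real (\<integral>\<^sup>+ p. ennreal (FA p) \<partial>(seq_measure \<Otimes>\<^sub>M seq_measure))"
  unfolding expected_regret_def by (rule integral_eq_nn_integral[OF jointA]) (simp add: regA_nn)
lemma erB: "expected_regret D fb \<sigma> \<alpha> T C ismain pt = enn2real (\<integral>\<^sup>+ p. ennreal (FB p) \<partial>(seq_measure \<Otimes>\<^sub>M seq_measure))"
  unfolding expected_regret_def by (rule integral_eq_nn_integral[OF jointB]) (simp add: regB_nn)

lemma final_inst:
  "expected_regret D fa \<sigma> \<alpha> T C ismain pt \<ge> \<delta> * exp (- Kc / 4) / 4 * real T \<or>
   expected_regret D fb \<sigma> \<alpha> T C ismain pt \<ge> \<delta> * exp (- Kc / 4) / 4 * real T"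
proof -
  define EA where "EA = (\<integral>\<^sup>+ p. ennreal (FA p) \<partial>(seq_measure \<Otimes>\<^sub>M seq_measure))"
  define EB where "EB = (\<integral>\<^sup>+ p. ennreal (FB p) \<partial>(seq_measure \<Otimes>\<^sub>M seq_measure))"
  have "EA < \<infinity>" unfolding EA_def by (rule le_less_trans[OF finA]) simp
  then have EA: "EA = ennreal (enn2real EA)" by simp
  have "EB < \<infinity>" unfolding EB_def by (rule le_less_trans[OF finB]) simp
  then have EB: "EB = ennreal (enn2real EB)" by simp
  have "ennreal (\<delta> * real T * exp (- Kc / 4) / 2) \<le> ennreal (enn2real EA) + ennreal (enn2real EB)"
    using both EA EB unfolding EA_def EB_def by simp
  also have "\<dots> = ennreal (enn2real EA + enn2real EB)" by (simp add: ennreal_plus)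
  finally have "\<delta> * real T * exp (- Kc / 4) / 2 \<le> enn2real EA + enn2real EB"
    by (subst (asm) ennreal_le_iff) auto
  then have "\<delta> * exp (- Kc / 4) / 4 * real T \<le> enn2real EA \<or> \<delta> * exp (- Kc / 4) / 4 * real T \<le> enn2real EB"
    by (auto simp: field_simps)
  then show ?thesis unfolding erA erB EA_def EB_def .
qed

end

theorem proposition5p1:
  fixes D :: "(real ^ 'd) set" and Mk l B \<sigma> \<alpha> :: real and C :: nat
  assumes "compact D" and "convex D" and "\<exists>x\<in>D. \<exists>y\<in>D. x \<noteq> y"
    and "Mk > 0" and "l > 0" and "B > 0" and "\<sigma> > 0" and "\<alpha> > 1"
  shows "\<exists>c>0. \<exists>T0. \<forall>T\<ge>T0. \<forall>ismain pt.
           admissible_alg D C T ismain pt \<longrightarrow>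
           (\<exists>f. rkhs_ball (se_kernel Mk l) D B f \<and>
                expected_regret D f \<sigma> \<alpha> T C ismain pt \<ge> c * real T)"
proof -
  obtain a b where aD: "a \<in> D" and bD: "b \<in> D" and ab: "a \<noteq> b" using assms(3) by blast
  define UU where "UU = suminf (\<lambda>k::nat. 1 / (1 + real k powr \<alpha>))"
  define KK where "KK = (B * Mk / \<sigma>)\<^sup>2 * ((real C + 1) * (UU + real C))"
  define dd where "dd = B * Mk * (1 - exp (- (norm (a - b))\<^sup>2 / (8 * l\<^sup>2)))"
  define cc where "cc = dd * exp (- KK / 4) / 4"
  have dd_pos: "dd > 0"
  proof -
    have "norm (a - b) > 0" using ab by simp
    then have "(norm (a - b))\<^sup>2 / (8 * l\<^sup>2) > 0" using assms(5) by simp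
    then have "exp (- (norm (a - b))\<^sup>2 / (8 * l\<^sup>2)) < 1" by simp
    then show ?thesis unfolding dd_def using assms(4,6) by simp
  qed
  show ?thesis
  proof (intro exI[of _ cc] conjI exI[of _ 0] allI impI)
    show "cc > 0" unfolding cc_def using dd_pos by simp
    fix T :: nat and ismain pt
    assume adm: "admissible_alg D C T ismain pt"
    interpret I: inst D a b Mk l B \<sigma> \<alpha> C T ismain pt
      by unfold_locales (use aD bD ab assms adm in auto)
    have eqd: "I.\<delta> = dd" unfolding I.\<delta>_def I.\<beta>_def dd_def ..
    have eqK: "I.Kc = KK" unfolding I.Kc_def I.U_def I.\<beta>_def KK_def UU_def ..
    from I.final_inst have "expected_regret D I.fa \<sigma> \<alpha> T C ismain pt \<ge> cc * real T \<or>
        expected_regret D I.fb \<sigma> \<alpha> T C ismain pt \<ge> cc * real T"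
      unfolding eqd eqK cc_def .
    then show "\<exists>f. rkhs_ball (se_kernel Mk l) D B f \<and> cc * real T \<le> expected_regret D f \<sigma> \<alpha> T C ismain pt"
    proof
      assume "expected_regret D I.fa \<sigma> \<alpha> T C ismain pt \<ge> cc * real T"
      moreover have "rkhs_ball (se_kernel Mk l) D B I.fa"
        unfolding I.fa_def by (rule bump_rkhs[OF assms(4) assms(6) aD])
      ultimately show ?thesis by blast
    next
      assume "expected_regret D I.fb \<sigma> \<alpha> T C ismain pt \<ge> cc * real T"
      moreover have "rkhs_ball (se_kernel Mk l) D B I.fb"
        unfolding I.fb_def by (rule bump_rkhs[OF assms(4) assms(6) bD])
      ultimately show ?thesis by blast
    qed
  qed
qed

end
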